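(* Let $n\ge 2$, let $w_0$ be the permutation with $w_0e_k=e_{n-k+1}$ for $k=1,\dots,n$, and for $a\neq b$ let $s_{ab}$ denote the transposition exchanging $a$ and $b$. For each pair $i\neq j$ in $\{1,\dots,n\}$, let $H_{ij}=\operatorname{span}\{E_{kl}: k\le i,\ l\ge j\}$. Then $X_{H_{ij}}=Y_w$ where $w=w_0s_{12}s_{23}\cdots s_{j-1,j}\,s_{n,n-1}\cdots s_{i+1,i}$ if $j<i$, and $w=w_0s_{12}s_{23}\cdots s_{j-2,j-1}\,s_{n,n-1}\cdots s_{i+1,i}$ if $j>i$ (products of permutation matrices).
   Context: $B$ is the group of invertible upper-triangular $n\times n$ complex matrices; $[g]\in GL_n(\mathbb{C})/B$ denotes the flag whose $k$-dimensional subspace is spanned by the first $k$ columns of $g$. $E_{kl}$ is the matrix unit with $1$ in entry $(k,l)$; $e_1,\dots,e_n$ is the standard basis. Permutations are identified with permutation matrices via $we_k=e_{w(k)}$. $X_{H}=\{[g]: g^{-1}E_{1n}g\in H\}$. The Schubert variety $Y_w$ is the closure of $\{[bw]: b\in B\}$. *)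

theory Defs
  imports "HOL-Analysis.Analysis" "HOL-Combinatorics.Transposition"
begin

text \<open>n x n complex matrices are represented as functions nat => nat => complex,
indices 1..n, zero outside {1..n} x {1..n}. The topology is the product topology
(on the supported matrices this is the Euclidean topology of C^(n^2)).\<close>

type_synonym cmat = "nat \<Rightarrow> nat \<Rightarrow> complex"

definition mats :: "nat \<Rightarrow> cmat set" where
  "mats n = {A. \<forall>i j. (i \<notin> {1..n} \<or> j \<notin> {1..n}) \<longrightarrow> A i j = 0}"

definition mmult :: "nat \<Rightarrow> cmat \<Rightarrow> cmat \<Rightarrow> cmat" where
  "mmult n A B = (\<lambda>i j. \<Sum>k=1..n. A i k * B k j)"

definition idm :: "nat \<Rightarrow> cmat" where
  "idm n = (\<lambda>i j. if i = j \<and> i \<in> {1..n} then 1 else 0)"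

definition mprod :: "nat \<Rightarrow> cmat list \<Rightarrow> cmat" where
  "mprod n Ms = foldr (mmult n) Ms (idm n)"

definition GL :: "nat \<Rightarrow> cmat set" where
  "GL n = {g \<in> mats n. \<exists>h \<in> mats n. mmult n g h = idm n \<and> mmult n h g = idm n}"

definition minv :: "nat \<Rightarrow> cmat \<Rightarrow> cmat" where
  "minv n g = (SOME h. h \<in> mats n \<and> mmult n g h = idm n \<and> mmult n h g = idm n)"

definition Bor :: "nat \<Rightarrow> cmat set" where
  "Bor n = {b \<in> GL n. \<forall>i j. j < i \<longrightarrow> b i j = 0}"

definition Eunit :: "nat \<Rightarrow> nat \<Rightarrow> cmat" where
  "Eunit k l = (\<lambda>i j. if i = k \<and> j = l then 1 else 0)"

definition pmat :: "nat \<Rightarrow> (nat \<Rightarrow> nat) \<Rightarrow> cmat" where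
  "pmat n w = (\<lambda>i j. if j \<in> {1..n} \<and> i = w j then 1 else 0)"

definition w0 :: "nat \<Rightarrow> nat \<Rightarrow> nat" where
  "w0 n = (\<lambda>k. if k \<in> {1..n} then n + 1 - k else k)"

text \<open>The flag [g] as the coset gB in GL_n / B.\<close>
definition flagof :: "nat \<Rightarrow> cmat \<Rightarrow> cmat set" where
  "flagof n g = {mmult n g b | b. b \<in> Bor n}"

definition Flags :: "nat \<Rightarrow> cmat set set" where
  "Flags n = flagof n ` GL n"

text \<open>Closed sets of the flag variety for the quotient topology GL_n -> GL_n/B.\<close>
definition flag_closed :: "nat \<Rightarrow> cmat set set \<Rightarrow> bool" where
  "flag_closed n C \<longleftrightarrow> C \<subseteq> Flags n \<and>
     closedin (top_of_set (GL n)) {g \<in> GL n. flagof n g \<in> C}"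

definition flag_closure :: "nat \<Rightarrow> cmat set set \<Rightarrow> cmat set set" where
  "flag_closure n S = \<Inter>{C. flag_closed n C \<and> S \<subseteq> C}"

definition XH :: "nat \<Rightarrow> cmat set \<Rightarrow> cmat set set" where
  "XH n H = {flagof n g | g. g \<in> GL n \<and> mmult n (mmult n (minv n g) (Eunit 1 n)) g \<in> H}"

definition Schubert :: "nat \<Rightarrow> cmat \<Rightarrow> cmat set set" where
  "Schubert n W = flag_closure n {flagof n (mmult n b W) | b. b \<in> Bor n}"

definition Hsp :: "nat \<Rightarrow> nat \<Rightarrow> nat \<Rightarrow> cmat set" where
  "Hsp n i j = {(\<lambda>a b. \<Sum>p\<in>{(k,l). k \<in> {1..n} \<and> l \<in> {1..n} \<and> k \<le> i \<and> j \<le> l}.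
                   c p * Eunit (fst p) (snd p) a b) | c. True}"

end

theory Submission
  imports Defs "Jordan_Normal_Form.Determinant" "HOL-Complex_Analysis.Complex_Analysis"
begin

definition mv :: "nat \<Rightarrow> cmat \<Rightarrow> (nat \<Rightarrow> complex) \<Rightarrow> nat \<Rightarrow> complex" where
  "mv n g x = (\<lambda>a. \<Sum>b=1..n. g a b * x b)"

definition ev :: "nat \<Rightarrow> nat \<Rightarrow> complex" where
  "ev k = (\<lambda>a. if a = k then 1 else 0)"

definition tm :: "nat \<Rightarrow> cmat \<Rightarrow> complex Matrix.mat" where
  "tm n g = Matrix.mat n n (\<lambda>(a,b). g (Suc a) (Suc b))"

definition fm :: "nat \<Rightarrow> complex Matrix.mat \<Rightarrow> cmat" where
  "fm n B = (\<lambda>a b. if a \<in> {1..n} \<and> b \<in> {1..n} then B $$ (a - 1, b - 1) else 0)"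

definition upper :: "cmat \<Rightarrow> bool" where
  "upper b \<longleftrightarrow> (\<forall>r c. c < r \<longrightarrow> b r c = 0)"

lemma sum_1n_shift: "(\<Sum>k=1..n. f k) = (\<Sum>k<n. f (Suc k))"
  by (induction n) (auto simp: atLeastAtMostSuc_conv add.commute)

lemma sum_1n_shift': "(\<Sum>k=Suc 0..n. f k) = (\<Sum>k\<in>{0..<n}. f (Suc k))"
  using sum_1n_shift[of f n] by (simp add: lessThan_atLeast0)

lemma matsD: "g \<in> mats n \<Longrightarrow> a \<notin> {1..n} \<or> b \<notin> {1..n} \<Longrightarrow> g a b = 0"
  unfolding mats_def by auto

lemma matsI: "(\<And>a b. a \<notin> {1..n} \<or> b \<notin> {1..n} \<Longrightarrow> g a b = 0) \<Longrightarrow> g \<in> mats n"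
  unfolding mats_def by auto

lemma mats_eqI: "g \<in> mats n \<Longrightarrow> h \<in> mats n \<Longrightarrow> (\<And>a b. a \<in> {1..n} \<Longrightarrow> b \<in> {1..n} \<Longrightarrow> g a b = h a b) \<Longrightarrow> g = h"
proof (intro ext)
  fix a b assume g: "g \<in> mats n" and h: "h \<in> mats n"
    and e: "\<And>a b. a \<in> {1..n} \<Longrightarrow> b \<in> {1..n} \<Longrightarrow> g a b = h a b"
  show "g a b = h a b"
  proof (cases "a \<in> {1..n} \<and> b \<in> {1..n}")
    case True then show ?thesis using e by blast
  next
    case False then show ?thesis using matsD[OF g, of a b] matsD[OF h, of a b] by auto
  qed
qed

lemma mmult_mats: "g \<in> mats n \<Longrightarrow> h \<in> mats n \<Longrightarrow> mmult n g h \<in> mats n"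
  unfolding mats_def mmult_def by auto

lemma idm_mats: "idm n \<in> mats n"
  unfolding mats_def idm_def by auto

lemma mmult_assoc: "mmult n (mmult n a b) c = mmult n a (mmult n b c)"
proof (intro ext)
  fix x y
  have "mmult n (mmult n a b) c x y = (\<Sum>l=1..n. \<Sum>k=1..n. a x k * b k l * c l y)"
    unfolding mmult_def by (simp add: sum_distrib_right)
  also have "\<dots> = (\<Sum>k=1..n. \<Sum>l=1..n. a x k * b k l * c l y)"
    by (rule sum.swap)
  also have "\<dots> = mmult n a (mmult n b c) x y"
    unfolding mmult_def by (simp add: sum_distrib_left mult.assoc)
  finally show "mmult n (mmult n a b) c x y = mmult n a (mmult n b c) x y" .
qed

lemma sum_delta_1n: "(\<Sum>k=1..(n::nat). if k = a then f k else 0) = (if a \<in> {1..n} then f a else 0)"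
  by (simp add: sum.delta)

lemma mmult_idm_right: "g \<in> mats n \<Longrightarrow> mmult n g (idm n) = g"
proof (intro ext)
  fix a b assume g: "g \<in> mats n"
  have "mmult n g (idm n) a b = (\<Sum>k=1..n. if k = b then g a k else 0)"
    unfolding mmult_def idm_def by (intro sum.cong) auto
  also have "\<dots> = g a b" using g by (simp add: sum_delta_1n matsD)
  finally show "mmult n g (idm n) a b = g a b" .
qed

lemma mmult_idm_left: "g \<in> mats n \<Longrightarrow> mmult n (idm n) g = g"
proof (intro ext)
  fix a b assume g: "g \<in> mats n"
  have "mmult n (idm n) g a b = (\<Sum>k=1..n. if k = a then g k b else 0)"
    unfolding mmult_def idm_def by (intro sum.cong) auto
  also have "\<dots> = g a b" using g by (simp add: sum_delta_1n matsD)
  finally show "mmult n (idm n) g a b = g a b" .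
qed

lemma tm_carrier: "tm n g \<in> carrier_mat n n"
  unfolding tm_def by simp

lemma tm_index: "a < n \<Longrightarrow> b < n \<Longrightarrow> tm n g $$ (a,b) = g (Suc a) (Suc b)"
  unfolding tm_def by simp

lemma tm_mult: "tm n (mmult n g h) = tm n g * tm n h"
  apply (rule eq_matI)
  apply (auto simp: tm_def mmult_def scalar_prod_def sum_1n_shift')
  done

lemma tm_idm: "tm n (idm n) = 1\<^sub>m n"
  by (rule eq_matI) (auto simp: tm_def idm_def)

lemma fm_mats: "fm n B \<in> mats n"
  unfolding fm_def mats_def by auto

lemma tm_fm: "B \<in> carrier_mat n n \<Longrightarrow> tm n (fm n B) = B"
  by (rule eq_matI) (auto simp: tm_def fm_def)

lemma tm_inj: "g \<in> mats n \<Longrightarrow> h \<in> mats n \<Longrightarrow> tm n g = tm n h \<Longrightarrow> g = h"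
proof (rule mats_eqI)
  fix a b assume g: "g \<in> mats n" and h: "h \<in> mats n" and e: "tm n g = tm n h"
    and a: "a \<in> {1..n}" and b: "b \<in> {1..n}"
  obtain a' b' where ab: "a = Suc a'" "b = Suc b'" "a' < n" "b' < n" using a b
    by (cases a; cases b) auto
  have "tm n g $$ (a', b') = tm n h $$ (a', b')" using e by simp
  then show "g a b = h a b" using ab by (simp add: tm_index)
qed

lemma GL_iff_det: "g \<in> GL n \<longleftrightarrow> g \<in> mats n \<and> Determinant.det (tm n g) \<noteq> 0"
proof
  assume "g \<in> GL n"
  then obtain h where g: "g \<in> mats n" and h: "h \<in> mats n" and gh: "mmult n g h = idm n"
    unfolding GL_def by auto
  have "Determinant.det (tm n g) * Determinant.det (tm n h) = 1"
    using arg_cong[OF gh, of "\<lambda>x. Determinant.det (tm n x)"]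
    by (simp add: tm_mult tm_idm det_mult[OF tm_carrier tm_carrier])
  then show "g \<in> mats n \<and> Determinant.det (tm n g) \<noteq> 0" using g by auto
next
  assume a: "g \<in> mats n \<and> Determinant.det (tm n g) \<noteq> 0"
  from det_non_zero_imp_unit[OF tm_carrier, of n g, OF a[THEN conjunct2], of "()"]
  obtain B where B: "B \<in> carrier_mat n n" "B * tm n g = 1\<^sub>m n" "tm n g * B = 1\<^sub>m n"
    unfolding Units_def ring_mat_def by auto
  have "mmult n g (fm n B) = idm n"
    by (rule tm_inj[where n=n]) (use a B in \<open>auto simp: tm_mult tm_fm tm_idm mmult_mats fm_mats idm_mats\<close>)
  moreover have "mmult n (fm n B) g = idm n"
    by (rule tm_inj[where n=n]) (use a B in \<open>auto simp: tm_mult tm_fm tm_idm mmult_mats fm_mats idm_mats\<close>)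
  ultimately show "g \<in> GL n" using a fm_mats unfolding GL_def by blast
qed

lemma GL_onesided: "g \<in> mats n \<Longrightarrow> h \<in> mats n \<Longrightarrow> mmult n g h = idm n \<Longrightarrow> g \<in> GL n \<and> h \<in> GL n"
proof -
  assume g: "g \<in> mats n" and h: "h \<in> mats n" and gh: "mmult n g h = idm n"
  have "Determinant.det (tm n g) * Determinant.det (tm n h) = 1"
    using arg_cong[OF gh, of "\<lambda>x. Determinant.det (tm n x)"]
    by (simp add: tm_mult tm_idm det_mult[OF tm_carrier tm_carrier])
  then show ?thesis using g h by (auto simp: GL_iff_det)
qed

lemma GL_mult: "g \<in> GL n \<Longrightarrow> h \<in> GL n \<Longrightarrow> mmult n g h \<in> GL n"
  by (auto simp: GL_iff_det mmult_mats tm_mult det_mult[OF tm_carrier tm_carrier])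

lemma GL_mats: "g \<in> GL n \<Longrightarrow> g \<in> mats n"
  unfolding GL_def by auto

lemma minv: assumes "g \<in> GL n"
  shows "minv n g \<in> mats n" "mmult n g (minv n g) = idm n" "mmult n (minv n g) g = idm n"
proof -
  have "\<exists>h. h \<in> mats n \<and> mmult n g h = idm n \<and> mmult n h g = idm n"
    using assms unfolding GL_def by auto
  from someI_ex[OF this] show "minv n g \<in> mats n" "mmult n g (minv n g) = idm n" "mmult n (minv n g) g = idm n"
    unfolding minv_def by auto
qed

lemma minv_GL: "g \<in> GL n \<Longrightarrow> minv n g \<in> GL n"
  using GL_onesided[OF minv(1) GL_mats minv(3)] by blast

lemma mv_mmult: "mv n (mmult n g h) x = mv n g (mv n h x)"
proof (intro ext)
  fix y
  have "mv n (mmult n g h) x y = (\<Sum>l=1..n. \<Sum>k=1..n. g y k * h k l * x l)"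
    unfolding mmult_def mv_def by (simp add: sum_distrib_right)
  also have "\<dots> = (\<Sum>k=1..n. \<Sum>l=1..n. g y k * h k l * x l)"
    by (rule sum.swap)
  also have "\<dots> = mv n g (mv n h x) y"
    unfolding mv_def by (simp add: sum_distrib_left mult.assoc)
  finally show "mv n (mmult n g h) x y = mv n g (mv n h x) y" .
qed

lemma mv_idm: "mv n (idm n) x = (\<lambda>a. if a \<in> {1..n} then x a else 0)"
proof (intro ext)
  fix a
  have "mv n (idm n) x a = (\<Sum>k=1..n. if k = a then x k else 0)"
    unfolding mv_def idm_def by (intro sum.cong) auto
  then show "mv n (idm n) x a = (if a \<in> {1..n} then x a else 0)" by (simp add: sum_delta_1n)
qed

lemma mv_ev: "k \<in> {1..n} \<Longrightarrow> mv n g (ev k) = (\<lambda>a. g a k)"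
proof (intro ext)
  fix a assume k: "k \<in> {1..n}"
  have "mv n g (ev k) a = (\<Sum>b=1..n. if b = k then g a b else 0)"
    unfolding mv_def ev_def by (intro sum.cong) auto
  then show "mv n g (ev k) a = g a k" using k by (simp add: sum_delta_1n)
qed

lemma det_upper: assumes "upper b"
  shows "Determinant.det (tm n b) = (\<Prod>k=1..n. b k k)"
proof -
  have "upper_triangular (tm n b)"
    using assms unfolding upper_triangular_def upper_def by (auto simp: tm_def)
  then have "Determinant.det (tm n b) = prod_list (diag_mat (tm n b))"
    using det_upper_triangular tm_carrier by blast
  also have "\<dots> = (\<Prod>i = 0..<n. b (Suc i) (Suc i))"
    by (simp add: prod_list_diag_prod tm_index tm_def)
  also have "\<dots> = (\<Prod>k=1..n. b k k)"
    by (induction n) (auto simp: atLeastAtMostSuc_conv)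
  finally show ?thesis .
qed


lemma Bor_upper: "b \<in> Bor n \<Longrightarrow> upper b"
  unfolding Bor_def upper_def by auto

lemma Bor_GL: "b \<in> Bor n \<Longrightarrow> b \<in> GL n"
  unfolding Bor_def by auto

lemma BorI: "b \<in> GL n \<Longrightarrow> upper b \<Longrightarrow> b \<in> Bor n"
  unfolding Bor_def upper_def by auto

lemma diag_nz: assumes "b \<in> GL n" "upper b" "k \<in> {1..n}" shows "b k k \<noteq> 0"
proof -
  have "(\<Prod>k=1..n. b k k) \<noteq> 0" using assms det_upper[of b n] by (auto simp: GL_iff_det)
  then show ?thesis using assms(3) by auto
qed

lemma mv_add_ev: "k \<in> {1..n} \<Longrightarrow> mv n b (\<lambda>a. x a + c * ev k a) = (\<lambda>r. mv n b x r + c * b r k)"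
proof (intro ext)
  fix r assume k: "k \<in> {1..n}"
  have "mv n b (\<lambda>a. x a + c * ev k a) r = mv n b x r + c * mv n b (ev k) r"
    unfolding mv_def by (simp add: distrib_left sum.distrib sum_distrib_left algebra_simps)
  then show "mv n b (\<lambda>a. x a + c * ev k a) r = mv n b x r + c * b r k"
    using mv_ev[OF k] by simp
qed

lemma mv_zero: "mv n b (\<lambda>_. 0) = (\<lambda>_. 0)"
  unfolding mv_def by simp

lemma backsub:
  assumes b: "b \<in> mats n" "upper b" "\<forall>k\<in>{1..n}. b k k \<noteq> 0"
  shows "m \<le> n \<Longrightarrow> (\<forall>a. y a \<noteq> 0 \<longrightarrow> a \<in> {1..m}) \<Longrightarrow>
         \<exists>x. (\<forall>a. x a \<noteq> 0 \<longrightarrow> a \<in> {1..m}) \<and> mv n b x = y"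
proof (induction m arbitrary: y)
  case 0
  then have "y = (\<lambda>_. 0)" by auto
  then show ?case by (intro exI[of _ "\<lambda>_. 0"]) (simp add: mv_zero)
next
  case (Suc m)
  define c where "c = y (Suc m) / b (Suc m) (Suc m)"
  define y' where "y' = (\<lambda>a. y a - c * b a (Suc m))"
  have bnz: "b (Suc m) (Suc m) \<noteq> 0" using b(3) Suc.prems(1) by auto
  have "\<forall>a. y' a \<noteq> 0 \<longrightarrow> a \<in> {1..m}"
  proof (intro allI impI)
    fix a assume ya: "y' a \<noteq> 0"
    show "a \<in> {1..m}"
    proof (rule ccontr)
      assume na: "a \<notin> {1..m}"
      consider "a = 0" | "a = Suc m" | "a > Suc m" using na by force
      then show False
      proof cases
        case 1
        then have "y a = 0" "b a (Suc m) = 0" using Suc.prems(2) b(1) by (auto simp: matsD)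
        then show False using ya by (simp add: y'_def)
      next
        case 2
        then show False using ya bnz by (simp add: y'_def c_def)
      next
        case 3
        then have "y a = 0" "b a (Suc m) = 0" using Suc.prems(2) b(2) by (auto simp: upper_def)
        then show False using ya by (simp add: y'_def)
      qed
    qed
  qed
  then obtain x' where x': "\<forall>a. x' a \<noteq> 0 \<longrightarrow> a \<in> {1..m}" "mv n b x' = y'"
    using Suc.IH[of y'] Suc.prems(1) by auto
  define x where "x = (\<lambda>a. x' a + c * ev (Suc m) a)"
  have "mv n b x = y"
    unfolding x_def using Suc.prems(1) by (subst mv_add_ev) (auto simp: x' y'_def)
  moreover have "\<forall>a. x a \<noteq> 0 \<longrightarrow> a \<in> {1..Suc m}"
    using x'(1) by (auto simp: x_def ev_def)
  ultimately show ?case by blast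
qed

lemma mv_inj: assumes "g \<in> GL n" "mv n g x = mv n g x'" "a \<in> {1..n}" shows "x a = x' a"
proof -
  have "mv n (mmult n (minv n g) g) x = mv n (mmult n (minv n g) g) x'"
    using assms(2) by (simp add: mv_mmult)
  then have "mv n (idm n) x a = mv n (idm n) x' a" using minv(3)[OF assms(1)] by simp
  then show ?thesis using assms(3) by (simp add: mv_idm)
qed

lemma minv_upper: assumes "b \<in> Bor n" shows "upper (minv n b)"
proof -
  have bG: "b \<in> GL n" and bu: "upper b" using assms by (auto simp: Bor_GL Bor_upper)
  have bd: "\<forall>k\<in>{1..n}. b k k \<noteq> 0" using diag_nz[OF bG bu] by auto
  show ?thesis unfolding upper_def
  proof (intro allI impI)
    fix r s :: nat assume sr: "s < r"
    show "minv n b r s = 0"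
    proof (cases "s \<in> {1..n} \<and> r \<in> {1..n}")
      case False
      then show ?thesis using minv(1)[OF bG] by (auto simp: matsD)
    next
      case True
      define x where "x = (\<lambda>a. minv n b a s)"
      have "mv n b x = mv n (mmult n b (minv n b)) (ev s)"
        using True by (simp add: mv_mmult mv_ev x_def)
      also have "\<dots> = mv n (idm n) (ev s)" using minv(2)[OF bG] by simp
      also have "\<dots> = ev s" using True by (auto simp: mv_idm ev_def)
      finally have e1: "mv n b x = ev s" .
      have evs: "\<forall>a. ev s a \<noteq> 0 \<longrightarrow> a \<in> {1..s}" using True by (simp add: ev_def)
      obtain x' where x': "\<forall>a. x' a \<noteq> 0 \<longrightarrow> a \<in> {1..s}" "mv n b x' = ev s"
        using backsub[OF GL_mats[OF bG] bu bd, of s "ev s", OF _ evs] True by auto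
      have "x r = x' r" using mv_inj[OF bG, of x x' r] e1 x'(2) True by auto
      then show ?thesis using x'(1) sr by (auto simp: x_def)
    qed
  qed
qed

lemma Bor_minv: "b \<in> Bor n \<Longrightarrow> minv n b \<in> Bor n"
  using BorI minv_GL Bor_GL minv_upper by blast

lemma upper_mult: "upper b \<Longrightarrow> upper c \<Longrightarrow> upper (mmult n b c)"
  unfolding upper_def mmult_def
proof (intro allI impI)
  fix r s :: nat assume b: "\<forall>r c. c < r \<longrightarrow> b r c = 0" and c: "\<forall>r ca. ca < r \<longrightarrow> c r ca = 0" and sr: "s < r"
  have z: "\<And>k. b r k * c k s = 0"
  proof -
    fix k show "b r k * c k s = 0"
      using b c sr by (cases "k < r") auto
  qed
  show "(\<Sum>k = 1..n. b r k * c k s) = 0" by (rule sum.neutral) (use z in blast)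
qed

lemma Bor_mult: "b \<in> Bor n \<Longrightarrow> c \<in> Bor n \<Longrightarrow> mmult n b c \<in> Bor n"
  by (intro BorI GL_mult upper_mult) (auto simp: Bor_GL Bor_upper)

lemma idm_GL: "idm n \<in> GL n"
  using GL_onesided[OF idm_mats idm_mats mmult_idm_left[OF idm_mats]] by blast

lemma idm_Bor: "idm n \<in> Bor n"
  by (intro BorI idm_GL) (auto simp: upper_def idm_def)

lemma flagof_mult: assumes "c \<in> Bor n" "g \<in> mats n"
  shows "flagof n (mmult n g c) = flagof n g"
proof
  show "flagof n (mmult n g c) \<subseteq> flagof n g"
    unfolding flagof_def using assms Bor_mult by (auto simp: mmult_assoc)
next
  show "flagof n g \<subseteq> flagof n (mmult n g c)"
  proof
    fix x assume "x \<in> flagof n g"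
    then obtain b where b: "b \<in> Bor n" "x = mmult n g b" unfolding flagof_def by auto
    have cG: "c \<in> GL n" using assms(1) Bor_GL by auto
    have "mmult n (mmult n g c) (mmult n (minv n c) b) = mmult n g (mmult n (mmult n c (minv n c)) b)"
      by (simp add: mmult_assoc)
    also have "\<dots> = x" using minv(2)[OF cG] b mmult_idm_left[OF GL_mats[OF Bor_GL[OF b(1)]]] by simp
    finally have "x = mmult n (mmult n g c) (mmult n (minv n c) b)" by simp
    then show "x \<in> flagof n (mmult n g c)"
      unfolding flagof_def using Bor_mult[OF Bor_minv[OF assms(1)] b(1)] by blast
  qed
qed

lemma in_flagof_self: "g \<in> mats n \<Longrightarrow> g \<in> flagof n g"
proof -
  assume g: "g \<in> mats n"
  have "g = mmult n g (idm n)" using mmult_idm_right[OF g] by simp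
  then show ?thesis unfolding flagof_def using idm_Bor by blast
qed

lemma flagof_eq: assumes "g \<in> mats n" "flagof n g = flagof n g'"
  shows "\<exists>b\<in>Bor n. g = mmult n g' b"
  using in_flagof_self[OF assms(1)] assms(2) unfolding flagof_def by auto


definition Sc :: "nat \<Rightarrow> nat \<Rightarrow> nat \<Rightarrow> cmat \<Rightarrow> bool" where
  "Sc n i j g \<longleftrightarrow> g \<in> GL n \<and> (\<forall>b. 1 \<le> b \<and> b < j \<longrightarrow> g n b = 0) \<and>
     (\<exists>u. (\<forall>a. u a \<noteq> 0 \<longrightarrow> a \<in> {1..i}) \<and> mv n g u = ev 1)"

lemma Hsp_iff: "M \<in> Hsp n i j \<longleftrightarrow> (\<forall>a b. M a b \<noteq> 0 \<longrightarrow> a \<in> {1..n} \<and> b \<in> {1..n} \<and> a \<le> i \<and> j \<le> b)"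
proof
  let ?P = "{(k,l). k \<in> {1..n} \<and> l \<in> {1..n} \<and> k \<le> i \<and> j \<le> l}"
  assume "M \<in> Hsp n i j"
  then obtain c where M: "M = (\<lambda>a b. \<Sum>p\<in>?P. c p * Eunit (fst p) (snd p) a b)"
    unfolding Hsp_def by auto
  show "\<forall>a b. M a b \<noteq> 0 \<longrightarrow> a \<in> {1..n} \<and> b \<in> {1..n} \<and> a \<le> i \<and> j \<le> b"
  proof (intro allI impI)
    fix a b assume "M a b \<noteq> 0"
    then obtain p where "p \<in> ?P" "c p * Eunit (fst p) (snd p) a b \<noteq> 0"
      unfolding M using sum.not_neutral_contains_not_neutral by blast
    then show "a \<in> {1..n} \<and> b \<in> {1..n} \<and> a \<le> i \<and> j \<le> b"
      by (auto simp: Eunit_def split: if_splits)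
  qed
next
  let ?P = "{(k,l). k \<in> {1..n} \<and> l \<in> {1..n} \<and> k \<le> i \<and> j \<le> l}"
  assume H: "\<forall>a b. M a b \<noteq> 0 \<longrightarrow> a \<in> {1..n} \<and> b \<in> {1..n} \<and> a \<le> i \<and> j \<le> b"
  have fin: "finite ?P"
    by (rule finite_subset[of _ "{1..n} \<times> {1..n}"]) auto
  have eq: "M = (\<lambda>a b. \<Sum>p\<in>?P. M (fst p) (snd p) * Eunit (fst p) (snd p) a b)"
  proof (intro ext)
    fix a b
    have "(\<Sum>p\<in>?P. M (fst p) (snd p) * Eunit (fst p) (snd p) a b) =
          (\<Sum>p\<in>?P. if p = (a,b) then M a b else 0)"
      by (intro sum.cong) (auto simp: Eunit_def)
    also have "\<dots> = (if (a,b) \<in> ?P then M a b else 0)"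
      using fin by (simp add: sum.delta')
    also have "\<dots> = M a b" using H by auto
    finally show "M a b = (\<Sum>p\<in>?P. M (fst p) (snd p) * Eunit (fst p) (snd p) a b)" by simp
  qed
  show "M \<in> Hsp n i j" unfolding Hsp_def
    by (rule CollectI, rule exI[of _ "\<lambda>p. M (fst p) (snd p)"], rule conjI[OF eq TrueI])
qed

lemma M_formula: assumes "1 \<le> n"
  shows "mmult n (mmult n h (Eunit 1 n)) g = (\<lambda>a b. h a 1 * g n b)"
proof (intro ext)
  fix a b
  have e1: "mmult n h (Eunit 1 n) a c = (if c = n then h a 1 else 0)" for c
  proof -
    have "mmult n h (Eunit 1 n) a c = (\<Sum>k=1..n. if k = 1 then (if c = n then h a 1 else 0) else 0)"
      unfolding mmult_def Eunit_def by (intro sum.cong) auto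
    also have "\<dots> = (if c = n then h a 1 else 0)" using assms by (simp add: sum_delta_1n)
    finally show ?thesis .
  qed
  have "mmult n (mmult n h (Eunit 1 n)) g a b = (\<Sum>k=1..n. if k = n then h a 1 * g n b else 0)"
    unfolding mmult_def[of n "mmult n h (Eunit 1 n)"] e1 by (intro sum.cong) auto
  also have "\<dots> = h a 1 * g n b" using assms by (simp add: sum_delta_1n)
  finally show "mmult n (mmult n h (Eunit 1 n)) g a b = h a 1 * g n b" .
qed

lemma minv_col1: assumes "g \<in> GL n" "1 \<le> n"
  shows "mv n g (\<lambda>a. minv n g a 1) = ev 1"
proof -
  have "mv n g (\<lambda>a. minv n g a 1) = mv n g (mv n (minv n g) (ev 1))"
    using assms by (simp add: mv_ev)
  also have "\<dots> = mv n (idm n) (ev 1)" using minv(2)[OF assms(1)] by (simp add: mv_mmult[symmetric])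
  also have "\<dots> = ev 1" using assms by (auto simp: mv_idm ev_def)
  finally show ?thesis .
qed

lemma row_n_nz: assumes "g \<in> GL n" "1 \<le> n" shows "\<exists>b\<in>{1..n}. g n b \<noteq> 0"
proof (rule ccontr)
  assume "\<not> ?thesis"
  then have "mmult n g (minv n g) n n = 0" unfolding mmult_def by auto
  then show False using minv(2)[OF assms(1)] assms(2) by (simp add: idm_def)
qed

lemma vec_nz: assumes "mv n g u = ev 1" shows "\<exists>a\<in>{1..n}. u a \<noteq> 0"
proof (rule ccontr)
  assume "\<not> ?thesis"
  then have "mv n g u 1 = 0" unfolding mv_def by auto
  then show False using assms by (simp add: ev_def)
qed

lemma XH_cond: assumes g: "g \<in> GL n" and n: "2 \<le> n" and i: "i \<in> {1..n}" and j: "j \<in> {1..n}"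
  shows "mmult n (mmult n (minv n g) (Eunit 1 n)) g \<in> Hsp n i j \<longleftrightarrow> Sc n i j g"
proof -
  define u where "u = (\<lambda>a. minv n g a 1)"
  have n1: "1 \<le> n" using n by simp
  have M: "mmult n (mmult n (minv n g) (Eunit 1 n)) g = (\<lambda>a b. u a * g n b)"
    unfolding u_def using M_formula[OF n1] by simp
  have gu: "mv n g u = ev 1" unfolding u_def using minv_col1[OF g n1] .
  obtain b0 where b0: "b0 \<in> {1..n}" "g n b0 \<noteq> 0" using row_n_nz[OF g n1] by auto
  obtain a0 where a0: "a0 \<in> {1..n}" "u a0 \<noteq> 0" using vec_nz[OF gu] by auto
  have umats: "\<And>a. a \<notin> {1..n} \<Longrightarrow> u a = 0" unfolding u_def using minv(1)[OF g] by (simp add: matsD)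
  show ?thesis
  proof
    assume "mmult n (mmult n (minv n g) (Eunit 1 n)) g \<in> Hsp n i j"
    then have H: "\<forall>a b. u a * g n b \<noteq> 0 \<longrightarrow> a \<in> {1..n} \<and> b \<in> {1..n} \<and> a \<le> i \<and> j \<le> b"
      unfolding M Hsp_iff by simp
    have "\<forall>a. u a \<noteq> 0 \<longrightarrow> a \<in> {1..i}"
    proof (intro allI impI)
      fix a assume "u a \<noteq> 0"
      then show "a \<in> {1..i}" using H[rule_format, of a b0] b0 by auto
    qed
    moreover have "\<forall>b. 1 \<le> b \<and> b < j \<longrightarrow> g n b = 0"
    proof (intro allI impI)
      fix b assume "1 \<le> b \<and> b < j"
      then show "g n b = 0" using H[rule_format, of a0 b] a0 by auto
    qed
    ultimately show "Sc n i j g" unfolding Sc_def using g gu by blast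
  next
    assume "Sc n i j g"
    then obtain u' where u': "\<forall>a. u' a \<noteq> 0 \<longrightarrow> a \<in> {1..i}" "mv n g u' = ev 1"
      and row: "\<forall>b. 1 \<le> b \<and> b < j \<longrightarrow> g n b = 0" unfolding Sc_def by blast
    have usupp: "u a \<noteq> 0 \<Longrightarrow> a \<in> {1..i}" for a
    proof -
      assume ua: "u a \<noteq> 0"
      then have an: "a \<in> {1..n}" using umats by blast
      have "u a = u' a" using mv_inj[OF g _ an, of u u'] gu u'(2) by simp
      then show "a \<in> {1..i}" using u'(1) ua by auto
    qed
    have gmats: "g \<in> mats n" using GL_mats[OF g] .
    show "mmult n (mmult n (minv n g) (Eunit 1 n)) g \<in> Hsp n i j"
      unfolding M Hsp_iff
    proof (intro allI impI)
      fix a b assume "u a * g n b \<noteq> 0"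
      then have "u a \<noteq> 0" "g n b \<noteq> 0" by auto
      moreover have "b \<in> {1..n}" using \<open>g n b \<noteq> 0\<close> gmats matsD by blast
      ultimately show "a \<in> {1..n} \<and> b \<in> {1..n} \<and> a \<le> i \<and> j \<le> b"
        using usupp[of a] row i by force
    qed
  qed
qed

lemma Sc_right: assumes "Sc n i j g" "c \<in> Bor n" "i \<le> n" shows "Sc n i j (mmult n g c)"
proof -
  obtain u where g: "g \<in> GL n" and row: "\<forall>b. 1 \<le> b \<and> b < j \<longrightarrow> g n b = 0"
    and u: "\<forall>a. u a \<noteq> 0 \<longrightarrow> a \<in> {1..i}" "mv n g u = ev 1"
    using assms(1) unfolding Sc_def by blast
  have cG: "c \<in> GL n" and cu: "upper c" using assms(2) by (auto simp: Bor_GL Bor_upper)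
  obtain x where x: "\<forall>a. x a \<noteq> 0 \<longrightarrow> a \<in> {1..i}" "mv n c x = u"
    using backsub[OF GL_mats[OF cG] cu, of i u] diag_nz[OF cG cu] assms(3) u(1) by auto
  have "mv n (mmult n g c) x = ev 1" by (simp add: mv_mmult x u)
  moreover have "\<forall>b. 1 \<le> b \<and> b < j \<longrightarrow> mmult n g c n b = 0"
  proof (intro allI impI)
    fix b assume b: "1 \<le> b \<and> b < j"
    have z: "\<And>k. g n k * c k b = 0"
    proof -
      fix k show "g n k * c k b = 0"
        using row b cu matsD[OF GL_mats[OF g], of n 0] by (cases "b < k"; cases "k = 0") (auto simp: upper_def)
    qed
    show "mmult n g c n b = 0" unfolding mmult_def by (rule sum.neutral) (use z in blast)
  qed
  ultimately show ?thesis unfolding Sc_def using GL_mult[OF g cG] x(1) by blast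
qed

lemma XH_mem: assumes g: "g \<in> GL n" and n: "2 \<le> n" and i: "i \<in> {1..n}" and j: "j \<in> {1..n}"
  shows "flagof n g \<in> XH n (Hsp n i j) \<longleftrightarrow> Sc n i j g"
proof
  assume "Sc n i j g"
  then show "flagof n g \<in> XH n (Hsp n i j)"
    unfolding XH_def using XH_cond[OF g n i j] g by blast
next
  assume "flagof n g \<in> XH n (Hsp n i j)"
  then obtain g' where g': "flagof n g = flagof n g'" "g' \<in> GL n"
    "mmult n (mmult n (minv n g') (Eunit 1 n)) g' \<in> Hsp n i j"
    unfolding XH_def by auto
  have "Sc n i j g'" using XH_cond[OF g'(2) n i j] g'(3) by blast
  moreover obtain b where "b \<in> Bor n" "g = mmult n g' b" using flagof_eq[OF GL_mats[OF g] g'(1)] by blast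
  ultimately show "Sc n i j g" using Sc_right i by auto
qed


lemma det_tm_expand: "Determinant.det (tm n X) =
  (\<Sum>p\<in>{p. p permutes {0..<n}}. signof p * (\<Prod>r\<in>{0..<n}. X (Suc r) (Suc (p r))))"
proof -
  have "Determinant.det (tm n X) = (\<Sum>p\<in>{p. p permutes {0..<n}}. signof p * (\<Prod>r = 0..<n. tm n X $$ (r, p r)))"
    by (rule det_def'[of "tm n X" n, OF tm_carrier])
  also have "\<dots> = (\<Sum>p\<in>{p. p permutes {0..<n}}. signof p * (\<Prod>r\<in>{0..<n}. X (Suc r) (Suc (p r))))"
  proof (rule sum.cong[OF refl])
    fix p assume p: "p \<in> {p. p permutes {0..<n}}"
    have "(\<Prod>r = 0..<n. tm n X $$ (r, p r)) = (\<Prod>r\<in>{0..<n}. X (Suc r) (Suc (p r)))"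
    proof (rule prod.cong[OF refl])
      fix r assume r: "r \<in> {0..<n}"
      have pp: "p permutes {0..<n}" using p by simp
      have "p r \<in> {0..<n}" using permutes_in_image[OF pp] r by simp
      then show "tm n X $$ (r, p r) = X (Suc r) (Suc (p r))" using r by (simp add: tm_index)
    qed
    then show "signof p * (\<Prod>r = 0..<n. tm n X $$ (r, p r)) = signof p * (\<Prod>r\<in>{0..<n}. X (Suc r) (Suc (p r)))"
      by simp
  qed
  finally show ?thesis .
qed

lemma cont_entry: "continuous_on UNIV (\<lambda>g::cmat. g r c)"
  using continuous_on_product_then_coordinatewise[OF continuous_on_product_coordinates[of r]] .

lemma cont_det:
  fixes F :: "'a::topological_space \<Rightarrow> cmat"
  assumes "\<And>r c. continuous_on S (\<lambda>x. F x r c)"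
  shows "continuous_on S (\<lambda>x. Determinant.det (tm n (F x)))"
  unfolding det_tm_expand
  by (intro continuous_intros assms)

lemma holo_det:
  fixes F :: "complex \<Rightarrow> cmat"
  assumes "\<And>r c. (\<lambda>t. F t r c) holomorphic_on S"
  shows "(\<lambda>t. Determinant.det (tm n (F t))) holomorphic_on S"
  unfolding det_tm_expand
  by (intro holomorphic_intros assms)

definition rc :: "cmat \<Rightarrow> nat \<Rightarrow> cmat" where
  "rc g a = (\<lambda>r c. if c = a then ev 1 r else g r c)"

lemma tm_mv: "tm n g *\<^sub>v Matrix.vec n (\<lambda>r. u (Suc r)) = Matrix.vec n (\<lambda>r. mv n g u (Suc r))"
  by (rule eq_vecI) (auto simp: tm_def mv_def scalar_prod_def Matrix.row_def sum_1n_shift')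

lemma det_rc: assumes "mv n g u = ev 1" "a \<in> {1..n}"
  shows "Determinant.det (tm n (rc g a)) = u a * Determinant.det (tm n g)"
proof -
  let ?x = "Matrix.vec n (\<lambda>r. u (Suc r))"
  have "tm n (rc g a) = replace_col (tm n g) (tm n g *\<^sub>v ?x) (a - 1)"
    unfolding tm_mv assms(1)
    by (rule eq_matI) (use assms(2) in \<open>auto simp: tm_def replace_col_def rc_def ev_def\<close>)
  also have "Determinant.det \<dots> = ?x $ (a - 1) * Determinant.det (tm n g)"
    by (rule cramer_lemma_mat[OF tm_carrier]) (use assms(2) in auto)
  moreover have "?x $ (a - 1) = u a" using assms(2) by (cases a) auto
  ultimately show ?thesis by simp
qed

lemma Sc_alt: assumes g: "g \<in> GL n" and n: "1 \<le> n"
  shows "(\<exists>u. (\<forall>a. u a \<noteq> 0 \<longrightarrow> a \<in> {1..i}) \<and> mv n g u = ev 1) \<longleftrightarrow>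
         (\<forall>a\<in>{i<..n}. Determinant.det (tm n (rc g a)) = 0)"
proof
  assume "\<exists>u. (\<forall>a. u a \<noteq> 0 \<longrightarrow> a \<in> {1..i}) \<and> mv n g u = ev 1"
  then obtain u where u: "\<forall>a. u a \<noteq> 0 \<longrightarrow> a \<in> {1..i}" "mv n g u = ev 1" by blast
  show "\<forall>a\<in>{i<..n}. Determinant.det (tm n (rc g a)) = 0"
  proof
    fix a assume a: "a \<in> {i<..n}"
    then have "u a = 0" using u(1) by force
    moreover have "a \<in> {1..n}" using a by auto
    ultimately show "Determinant.det (tm n (rc g a)) = 0" using det_rc[OF u(2)] by simp
  qed
next
  assume D: "\<forall>a\<in>{i<..n}. Determinant.det (tm n (rc g a)) = 0"
  define u where "u = (\<lambda>a. minv n g a 1)"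
  have gu: "mv n g u = ev 1" unfolding u_def using minv_col1[OF g n] .
  have dg: "Determinant.det (tm n g) \<noteq> 0" using g by (simp add: GL_iff_det)
  have "\<forall>a. u a \<noteq> 0 \<longrightarrow> a \<in> {1..i}"
  proof (intro allI impI)
    fix a assume ua: "u a \<noteq> 0"
    then have an: "a \<in> {1..n}" unfolding u_def using minv(1)[OF g] matsD by blast
    show "a \<in> {1..i}"
    proof (rule ccontr)
      assume "a \<notin> {1..i}"
      then have "a \<in> {i<..n}" using an by auto
      then have "u a * Determinant.det (tm n g) = 0" using D det_rc[OF gu an] by simp
      then show False using ua dg by simp
    qed
  qed
  then show "\<exists>u. (\<forall>a. u a \<noteq> 0 \<longrightarrow> a \<in> {1..i}) \<and> mv n g u = ev 1" using gu by blast
qed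

lemma Sc_closed: assumes n: "1 \<le> n"
  shows "closedin (top_of_set (GL n)) {g \<in> GL n. Sc n i j g}"
proof -
  define T where "T = (\<Inter>b\<in>{1..<j}. {g::cmat. g n b = 0}) \<inter> (\<Inter>a\<in>{i<..n}. {g. Determinant.det (tm n (rc g a)) = 0})"
  have "closed T" unfolding T_def
  proof (intro closed_Int closed_INT ballI)
    fix b show "closed {g::cmat. g n b = 0}"
      using closed_Collect_eq[OF cont_entry continuous_on_const] by blast
  next
    fix a
    have "continuous_on UNIV (\<lambda>g. Determinant.det (tm n (rc g a)))"
    proof (rule cont_det)
      fix r c show "continuous_on UNIV (\<lambda>x. rc x a r c)"
        by (cases "c = a") (simp_all add: rc_def cont_entry)
    qed
    then show "closed {g. Determinant.det (tm n (rc g a)) = 0}"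
      using closed_Collect_eq[OF _ continuous_on_const] by blast
  qed
  moreover have "{g \<in> GL n. Sc n i j g} = GL n \<inter> T"
    unfolding T_def Sc_def using Sc_alt[OF _ n] by auto
  ultimately show ?thesis using closedin_closed_Int by metis
qed

lemma limpt_nonzero:
  assumes holf: "f holomorphic_on UNIV" and f1: "f 1 \<noteq> 0"
  shows "\<exists>s. (\<forall>m. s m \<noteq> 0 \<and> f (s m) \<noteq> 0) \<and> s \<longlonglongrightarrow> 0"
proof -
  have "0 islimpt {t. f t \<noteq> 0}"
  proof (rule ccontr)
    assume "\<not> 0 islimpt {t. f t \<noteq> 0}"
    then obtain e where e: "e > 0" "\<And>t. f t \<noteq> 0 \<Longrightarrow> t \<noteq> 0 \<Longrightarrow> dist t 0 \<ge> e"
      unfolding islimpt_approachable by (metis mem_Collect_eq not_le)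
    let ?U = "ball 0 e - {0::complex}"
    have "0 islimpt ball (0::complex) e" using e(1) by (simp add: islimpt_ball)
    then have A: "0 islimpt ?U"
      by (metis insert_Diff_single islimpt_insert)
    have B: "f z = 0" if z: "z \<in> ?U" for z
    proof (rule ccontr)
      assume "f z \<noteq> 0"
      moreover have "z \<noteq> 0" using z by simp
      ultimately have "dist z 0 \<ge> e" using e(2) by blast
      moreover have "dist z 0 < e" using z by (simp add: dist_commute)
      ultimately show False by simp
    qed
    have "f 1 = 0"
      by (rule analytic_continuation[OF holf open_UNIV connected_UNIV subset_UNIV UNIV_I A B UNIV_I])
    then show False using f1 by simp
  qed
  then obtain s where s: "\<forall>m::nat. s m \<in> {t. f t \<noteq> 0} - {0}" "s \<longlonglongrightarrow> 0"
    unfolding islimpt_sequential by blast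
  then show ?thesis by auto
qed

lemma closedin_seq: assumes "closedin (top_of_set U) P" "\<And>m. x m \<in> P" "x \<longlonglongrightarrow> l" "l \<in> U"
  shows "l \<in> P"
proof -
  obtain T where T: "closed T" "P = U \<inter> T" using assms(1) closedin_closed by metis
  have "l \<in> T" using closed_sequentially[OF T(1), of x l] assms(2,3) T(2) by auto
  then show ?thesis using T(2) assms(4) by auto
qed

lemma line_tendsto: "(\<lambda>m. (\<lambda>a b. g a b + s m * D a b)) \<longlonglongrightarrow> (g::cmat)" if "s \<longlonglongrightarrow> 0"
proof -
  have c: "continuous_on UNIV (\<lambda>t::complex. (\<lambda>a b. g a b + t * D a b))"
    by (intro continuous_on_coordinatewise_then_product continuous_intros)
  have "isCont (\<lambda>t::complex. (\<lambda>a b. g a b + t * D a b)) 0"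
    using c continuous_on_eq_continuous_at open_UNIV by blast
  from isCont_tendsto_compose[OF this that] show ?thesis by simp
qed


definition gv :: "nat \<Rightarrow> nat \<Rightarrow> nat \<Rightarrow> nat" where
  "gv i j k = (if k < j \<and> \<not> i < k then k + 1 else if i < k \<and> \<not> k < j then k - 1 else k)"

lemma gv_mono: "k < c \<Longrightarrow> k \<noteq> i \<Longrightarrow> k \<noteq> j \<Longrightarrow> c \<noteq> i \<Longrightarrow> c \<noteq> j \<Longrightarrow> i \<noteq> j \<Longrightarrow> gv i j k < gv i j c"
  unfolding gv_def by (cases "k < j"; cases "i < k"; cases "c < j"; cases "i < c") auto

lemma gv_range: "i \<noteq> j \<Longrightarrow> k \<noteq> i \<Longrightarrow> k \<noteq> j \<Longrightarrow> 1 \<le> k \<Longrightarrow> k \<le> n \<Longrightarrow> i \<le> n \<Longrightarrow> j \<le> n \<Longrightarrow> 1 \<le> i \<Longrightarrow> 1 \<le> j \<Longrightarrow> 2 \<le> gv i j k \<and> gv i j k + 1 \<le> n"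
  unfolding gv_def by (cases "k < j"; cases "i < k") auto

definition vv :: "nat \<Rightarrow> nat \<Rightarrow> nat \<Rightarrow> nat \<Rightarrow> nat" where
  "vv n i j k = (if k = j then 1 else if k = i then n else gv i j k)"

definition ww :: "nat \<Rightarrow> nat \<Rightarrow> nat \<Rightarrow> nat \<Rightarrow> nat" where
  "ww n i j k = (if k \<in> {1..n} then n + 1 - vv n i j k else k)"

locale wsetup =
  fixes n i j :: nat
  assumes n2: "2 \<le> n" and i: "i \<in> {1..n}" and j: "j \<in> {1..n}" and ij: "i \<noteq> j"
begin

abbreviation "w \<equiv> ww n i j"

lemma gvr: "k \<in> {1..n} \<Longrightarrow> k \<noteq> i \<Longrightarrow> k \<noteq> j \<Longrightarrow> 2 \<le> gv i j k \<and> gv i j k + 1 \<le> n"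
  using gv_range[of i j k n] i j ij by auto

lemma vv_range: "k \<in> {1..n} \<Longrightarrow> vv n i j k \<in> {1..n}"
  using n2 gvr[of k] unfolding vv_def by auto

lemma vv_inj: assumes "k \<in> {1..n}" "c \<in> {1..n}" "vv n i j k = vv n i j c" shows "k = c"
proof -
  have A: "\<And>x. x \<in> {1..n} \<Longrightarrow> x \<noteq> i \<Longrightarrow> x \<noteq> j \<Longrightarrow> vv n i j x = gv i j x \<and> 2 \<le> gv i j x \<and> gv i j x + 1 \<le> n"
    using gvr unfolding vv_def by auto
  have vj: "vv n i j j = 1" and vi: "vv n i j i = n" using ij unfolding vv_def by auto
  show ?thesis
  proof (cases "k = j \<or> k = i \<or> c = j \<or> c = i")
    case True
    then show ?thesis using A[of k] A[of c] assms vj vi n2 ij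
      by (cases "c = i"; cases "c = j"; cases "k = i"; cases "k = j") auto
  next
    case False
    then have "vv n i j k = gv i j k" "vv n i j c = gv i j c" using A assms by auto
    then show ?thesis using gv_mono[of k c i j] gv_mono[of c k i j] False ij assms(3)
      by (metis less_irrefl nat_neq_iff)
  qed
qed

lemma w_range: "k \<in> {1..n} \<Longrightarrow> w k \<in> {1..n}"
  using vv_range[of k] unfolding ww_def by auto


lemma w_inj: "k \<in> {1..n} \<Longrightarrow> c \<in> {1..n} \<Longrightarrow> w k = w c \<Longrightarrow> k = c"
  using vv_inj[of k c] vv_range[of k] vv_range[of c] unfolding ww_def by auto

lemma w_inj_on: "inj_on w {1..n}"
  using w_inj by (auto intro: inj_onI)

lemma w_image: "w ` {1..n} = {1..n}"
proof -
  have "w ` {1..n} \<subseteq> {1..n}" using w_range by auto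
  moreover have "card (w ` {1..n}) = card {1..n}" using card_image[OF w_inj_on] by simp
  ultimately show ?thesis by (simp add: card_subset_eq)
qed

lemma w_surj: "q \<in> {1..n} \<Longrightarrow> \<exists>c\<in>{1..n}. w c = q"
  using w_image by (metis imageE)

lemma w_i: "w i = 1"
  using i ij unfolding ww_def vv_def by auto

lemma w_j: "w j = n"
  using j ij unfolding ww_def vv_def by auto

lemma w_key: assumes "k \<in> {1..n}" "c \<in> {1..n}" "k \<noteq> i" "k < c" "w k < w c"
  shows "c = j \<and> k < j"
proof -
  have lt: "vv n i j c < vv n i j k"
    using assms vv_range[of k] vv_range[of c] unfolding ww_def by auto
  have A: "\<And>x. x \<in> {1..n} \<Longrightarrow> x \<noteq> i \<Longrightarrow> x \<noteq> j \<Longrightarrow> vv n i j x = gv i j x"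
    unfolding vv_def by auto
  have vj: "vv n i j j = 1" and vi: "vv n i j i = n" using ij unfolding vv_def by auto
  have cj: "c = j"
  proof (rule ccontr)
    assume cj: "c \<noteq> j"
    show False
    proof (cases "c = i")
      case True
      then show False using lt vi vv_range[OF assms(1)] by auto
    next
      case ci: False
      show False
      proof (cases "k = j")
        case True
        then show False using lt vj vv_range[OF assms(2)] by auto
      next
        case False
        then show False using gv_mono[of k c i j] A[OF assms(1) assms(3) False] A[OF assms(2) ci cj]
            assms(3,4) ci cj ij lt by auto
      qed
    qed
  qed
  then show ?thesis using assms(4) by simp
qed

end


definition Ck :: "nat \<Rightarrow> nat \<Rightarrow> nat \<Rightarrow> nat \<Rightarrow> nat set" where
  "Ck n i j k = {c \<in> {1..k}. ww n i j k \<le> ww n i j c}"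

definition Ak :: "nat \<Rightarrow> nat \<Rightarrow> nat \<Rightarrow> cmat \<Rightarrow> nat \<Rightarrow> cmat" where
  "Ak n i j h k = (\<lambda>q c. if c \<in> Ck n i j k then (if q \<in> ww n i j ` Ck n i j k then h q c else 0)
                        else pmat n (ww n i j) q c)"

context wsetup begin

abbreviation "W \<equiv> pmat n w"

lemma W_entry: "W q c = (if c \<in> {1..n} \<and> q = w c then 1 else 0)"
  unfolding pmat_def by auto

lemma W_mats: "W \<in> mats n"
proof (rule matsI)
  fix a b assume "a \<notin> {1..n} \<or> b \<notin> {1..n}"
  then show "W a b = 0" using w_range[of b] by (auto simp: W_entry)
qed

lemma W_GL: "W \<in> GL n"
proof -
  let ?T = "\<lambda>a b. W b a"
  have T: "?T \<in> mats n" using W_mats by (auto simp: mats_def)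
  have "mmult n ?T W = idm n"
  proof (intro ext)
    fix a b
    have "mmult n ?T W a b = (\<Sum>k=1..n. if k = w a then (if a \<in> {1..n} \<and> b \<in> {1..n} \<and> w a = w b then 1 else 0) else 0)"
      unfolding mmult_def by (intro sum.cong) (auto simp: W_entry)
    also have "\<dots> = (if a \<in> {1..n} \<and> b \<in> {1..n} \<and> w a = w b then 1 else 0)"
      using w_range[of a] by (auto simp: sum_delta_1n)
    also have "\<dots> = idm n a b" unfolding idm_def using w_inj by auto
    finally show "mmult n ?T W a b = idm n a b" .
  qed
  then show ?thesis using GL_onesided[OF T W_mats] by blast
qed

lemma W_col_i: "W a i = ev 1 a"
  using i w_i unfolding W_entry ev_def by auto

lemma W_row_n: "1 \<le> b \<Longrightarrow> b < j \<Longrightarrow> W n b = 0"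
  using w_j w_inj j unfolding W_entry by (metis atLeastAtMost_iff less_irrefl)

lemma mult_W: "mmult n b W q c = (if c \<in> {1..n} then b q (w c) else 0)"
proof -
  have "mmult n b W q c = (\<Sum>r=1..n. if r = w c then (if c \<in> {1..n} then b q r else 0) else 0)"
    unfolding mmult_def by (intro sum.cong) (auto simp: W_entry)
  also have "\<dots> = (if c \<in> {1..n} then b q (w c) else 0)"
    using w_range[of c] by (auto simp: sum_delta_1n)
  finally show ?thesis .
qed

lemma Ck_sub: "Ck n i j k \<subseteq> {1..k}"
  unfolding Ck_def by auto

lemma Ck_self: "k \<in> {1..n} \<Longrightarrow> k \<in> Ck n i j k"
  unfolding Ck_def by auto

lemma Ak_W: "k \<in> {1..n} \<Longrightarrow> Ak n i j W k = W"
proof (intro ext)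
  fix q c assume k: "k \<in> {1..n}"
  show "Ak n i j W k q c = W q c"
  proof (cases "c \<in> Ck n i j k")
    case True
    then show ?thesis unfolding Ak_def by (auto simp: W_entry)
  next
    case False
    then show ?thesis unfolding Ak_def by simp
  qed
qed

lemma Ak_mats: "h \<in> mats n \<Longrightarrow> k \<in> {1..n} \<Longrightarrow> Ak n i j h k \<in> mats n"
proof (rule matsI)
  fix a b assume h: "h \<in> mats n" and k: "k \<in> {1..n}" and ab: "a \<notin> {1..n} \<or> b \<notin> {1..n}"
  have Ckn: "Ck n i j k \<subseteq> {1..n}" using k unfolding Ck_def by auto
  show "Ak n i j h k a b = 0"
  proof (cases "b \<in> Ck n i j k")
    case True
    then have "b \<in> {1..n}" using Ckn by auto
    then have "a \<notin> {1..n}" using ab by auto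
    then show ?thesis using h True by (auto simp: Ak_def matsD)
  next
    case False
    then show ?thesis using ab matsD[OF W_mats] by (auto simp: Ak_def)
  qed
qed

end


context wsetup begin

lemma Ck_n: "k \<in> {1..n} \<Longrightarrow> Ck n i j k \<subseteq> {1..n}"
  unfolding Ck_def by auto

lemma solve_k:
  assumes h: "h \<in> mats n" and row: "\<forall>b. 1 \<le> b \<and> b < j \<longrightarrow> h n b = 0"
    and k: "k \<in> {1..n}" "k \<noteq> i" and d: "Determinant.det (tm n (Ak n i j h k)) \<noteq> 0"
  defines "y \<equiv> (\<lambda>c. if c \<in> Ck n i j k then mv n (minv n (Ak n i j h k)) (ev (w k)) c else 0)"
  shows "(\<forall>q. w k < q \<longrightarrow> mv n h y q = 0) \<and> mv n h y (w k) = 1"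
proof -
  define A where "A = Ak n i j h k"
  define C where "C = Ck n i j k"
  define y0 where "y0 = mv n (minv n A) (ev (w k))"
  have yd: "y = (\<lambda>c. if c \<in> C then y0 c else 0)" unfolding y_def y0_def A_def C_def by simp
  have AG: "A \<in> GL n" unfolding A_def using d Ak_mats[OF h k(1)] by (simp add: GL_iff_det)
  have wk: "w k \<in> {1..n}" using w_range[OF k(1)] .
  have Ay0: "mv n A y0 = ev (w k)"
  proof -
    have "mv n A y0 = mv n (idm n) (ev (w k))"
      unfolding y0_def by (simp add: mv_mmult[symmetric] minv(2)[OF AG])
    also have "\<dots> = ev (w k)" using wk by (auto simp: mv_idm ev_def)
    finally show ?thesis .
  qed
  have Cn: "C \<subseteq> {1..n}" unfolding C_def using Ck_n[OF k(1)] .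
  have kC: "k \<in> C" unfolding C_def using Ck_self[OF k(1)] .
  have F1: "y0 c = 0" if c: "c \<in> {1..n}" "c \<notin> C" for c
  proof -
    have wcC: "w c \<notin> w ` C" using c Cn w_inj by blast
    have "mv n A y0 (w c) = (\<Sum>c'=1..n. if c' = c then y0 c' else 0)"
      unfolding mv_def
    proof (intro sum.cong refl)
      fix c' assume c': "c' \<in> {1..n}"
      show "A (w c) c' * y0 c' = (if c' = c then y0 c' else 0)"
      proof (cases "c' \<in> C")
        case True
        then show ?thesis using wcC c(2) unfolding A_def Ak_def C_def[symmetric] by auto
      next
        case False
        have "W (w c) c' = (if c' = c then 1 else 0)" using w_inj[OF c(1) c'] c' by (auto simp: W_entry)
        then show ?thesis using False unfolding A_def Ak_def C_def[symmetric] by simp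
      qed
    qed
    also have "\<dots> = y0 c" using c(1) by (simp add: sum_delta_1n)
    finally have "y0 c = ev (w k) (w c)" using Ay0 by simp
    moreover have "w c \<noteq> w k" using w_inj[OF c(1) k(1)] c(2) kC by auto
    ultimately show ?thesis by (simp add: ev_def)
  qed
  have F2: "mv n h y q = ev (w k) q" if q: "q \<in> w ` C" for q
  proof -
    have "mv n h y q = mv n A y0 q"
      unfolding mv_def
    proof (intro sum.cong refl)
      fix c assume c: "c \<in> {1..n}"
      show "h q c * y c = A q c * y0 c"
      proof (cases "c \<in> C")
        case True
        then show ?thesis using q unfolding yd A_def Ak_def C_def[symmetric] by simp
      next
        case False
        then show ?thesis using F1[OF c False] unfolding yd A_def Ak_def C_def[symmetric] by simp
      qed
    qed
    then show ?thesis using Ay0 by simp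
  qed
  have one: "mv n h y (w k) = 1" using F2[of "w k"] kC by (simp add: ev_def)
  have zero: "mv n h y q = 0" if q: "w k < q" for q
  proof (cases "q \<in> {1..n}")
    case False
    then show ?thesis unfolding mv_def using matsD[OF h] by simp
  next
    case True
    then obtain c where c: "c \<in> {1..n}" "w c = q" using w_surj by blast
    show ?thesis
    proof (cases "c \<in> C")
      case True
      then show ?thesis using F2[of q] c q by (auto simp: ev_def)
    next
      case False
      then have "k < c" using c q unfolding C_def Ck_def by auto
      then have cj: "c = j" "k < j" using w_key[OF k(1) c(1) k(2)] c q by auto
      then have qn: "q = n" using c w_j by simp
      have z: "\<And>c'. h n c' * y c' = 0"
      proof -
        fix c' show "h n c' * y c' = 0"
        proof (cases "c' \<in> C")
          case True
          then have "1 \<le> c' \<and> c' < j" using cj(2) unfolding C_def Ck_def by auto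
          then show ?thesis using row by simp
        next
          case False then show ?thesis unfolding yd by simp
        qed
      qed
      show ?thesis unfolding mv_def qn by (rule sum.neutral) (use z in blast)
    qed
  qed
  show ?thesis using one zero by blast
qed

end


definition Yv :: "nat \<Rightarrow> nat \<Rightarrow> nat \<Rightarrow> cmat \<Rightarrow> nat \<Rightarrow> nat \<Rightarrow> complex" where
  "Yv n i j h k = (if k = i then ev i else
     (\<lambda>c. if c \<in> Ck n i j k then mv n (minv n (Ak n i j h k)) (ev (ww n i j k)) c else 0))"

definition Cmat :: "nat \<Rightarrow> nat \<Rightarrow> nat \<Rightarrow> cmat \<Rightarrow> cmat" where
  "Cmat n i j h = (\<lambda>q k. if k \<in> {1..n} then Yv n i j h k q else 0)"

context wsetup begin

lemma Y_props:
  assumes h: "h \<in> mats n" and col: "\<forall>a. h a i = ev 1 a" and row: "\<forall>b. 1 \<le> b \<and> b < j \<longrightarrow> h n b = 0"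
    and k: "k \<in> {1..n}" and d: "k \<noteq> i \<longrightarrow> Determinant.det (tm n (Ak n i j h k)) \<noteq> 0"
  shows "(\<forall>c. Yv n i j h k c \<noteq> 0 \<longrightarrow> c \<in> {1..k}) \<and> (\<forall>q. w k < q \<longrightarrow> mv n h (Yv n i j h k) q = 0)
         \<and> mv n h (Yv n i j h k) (w k) = 1"
proof (cases "k = i")
  case True
  have "mv n h (ev i) = (\<lambda>a. h a i)" using mv_ev i by blast
  then have "mv n h (ev i) = ev 1" using col by auto
  then show ?thesis using True w_i i by (auto simp: Yv_def ev_def)
next
  case False
  have s: "\<forall>c. Yv n i j h k c \<noteq> 0 \<longrightarrow> c \<in> {1..k}"
    using False by (auto simp: Yv_def Ck_def)
  have "Yv n i j h k = (\<lambda>c. if c \<in> Ck n i j k then mv n (minv n (Ak n i j h k)) (ev (w k)) c else 0)"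
    using False by (simp add: Yv_def)
  then show ?thesis using s solve_k[OF h row k False] d False by simp
qed

lemma w_bij: "bij_betw w {1..n} {1..n}"
  using w_inj_on w_image by (simp add: bij_betw_def)

lemma winv1: "r \<in> {1..n} \<Longrightarrow> the_inv_into {1..n} w r \<in> {1..n} \<and> w (the_inv_into {1..n} w r) = r"
proof -
  assume r: "r \<in> {1..n}"
  then have r': "r \<in> w ` {1..n}" using w_image by simp
  show ?thesis using the_inv_into_into[OF w_inj_on r' subset_refl] f_the_inv_into_f[OF w_inj_on r'] by simp
qed

lemma winv2: "c \<in> {1..n} \<Longrightarrow> the_inv_into {1..n} w (w c) = c"
  using the_inv_into_f_f[OF w_inj_on] by blast

lemma crit:
  assumes hG: "h \<in> GL n" and col: "\<forall>a. h a i = ev 1 a" and row: "\<forall>b. 1 \<le> b \<and> b < j \<longrightarrow> h n b = 0"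
    and d: "\<forall>k\<in>{1..n}. k \<noteq> i \<longrightarrow> Determinant.det (tm n (Ak n i j h k)) \<noteq> 0"
  shows "\<exists>c\<in>Bor n. \<exists>b\<in>Bor n. mmult n h c = mmult n b W"
proof -
  have h: "h \<in> mats n" using GL_mats[OF hG] .
  define Cm where "Cm = Cmat n i j h"
  define X where "X = mmult n h Cm"
  define wi where "wi = the_inv_into {1..n} w"
  define bB where "bB = (\<lambda>q r. if r \<in> {1..n} then X q (wi r) else 0)"
  have YP: "\<And>k. k \<in> {1..n} \<Longrightarrow> (\<forall>c. Yv n i j h k c \<noteq> 0 \<longrightarrow> c \<in> {1..k}) \<and>
      (\<forall>q. w k < q \<longrightarrow> mv n h (Yv n i j h k) q = 0) \<and> mv n h (Yv n i j h k) (w k) = 1"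
    using Y_props[OF h col row] d by blast
  have Xk: "X q k = (if k \<in> {1..n} then mv n h (Yv n i j h k) q else 0)" for q k
    unfolding X_def mmult_def Cm_def Cmat_def mv_def by auto
  have bW: "mmult n bB W = X"
  proof (intro ext)
    fix q c
    show "mmult n bB W q c = X q c"
      unfolding mult_W using w_range[of c] winv2[of c] by (auto simp: bB_def wi_def Xk)
  qed
  have bmats: "bB \<in> mats n"
  proof (rule matsI)
    fix a b assume "a \<notin> {1..n} \<or> b \<notin> {1..n}"
    then show "bB a b = 0" unfolding bB_def Xk mv_def using matsD[OF h] by auto
  qed
  have bup: "upper bB" unfolding upper_def
  proof (intro allI impI)
    fix q r :: nat assume qr: "r < q"
    show "bB q r = 0"
    proof (cases "r \<in> {1..n}")
      case True
      have k: "wi r \<in> {1..n}" "w (wi r) = r" using winv1[OF True] unfolding wi_def by auto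
      then show ?thesis using YP[OF k(1)] qr True unfolding bB_def Xk by auto
    next
      case False then show ?thesis by (auto simp: bB_def)
    qed
  qed
  have bdiag: "bB r r = 1" if r: "r \<in> {1..n}" for r
  proof -
    have k: "wi r \<in> {1..n}" "w (wi r) = r" using winv1[OF r] unfolding wi_def by auto
    show ?thesis using YP[OF k(1)] r k unfolding bB_def Xk by auto
  qed
  have "Determinant.det (tm n bB) = 1" using det_upper[OF bup, of n] bdiag by simp
  then have bG: "bB \<in> GL n" using bmats by (simp add: GL_iff_det)
  have Cmats: "Cm \<in> mats n"
  proof (rule matsI)
    fix a b assume ab: "a \<notin> {1..n} \<or> b \<notin> {1..n}"
    show "Cm a b = 0"
    proof (cases "b \<in> {1..n}")
      case True
      then have "a \<notin> {1..n}" using ab by auto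
      then show ?thesis using YP[OF True] True unfolding Cm_def Cmat_def by force
    next
      case False then show ?thesis by (auto simp: Cm_def Cmat_def)
    qed
  qed
  have Cup: "upper Cm" unfolding upper_def
  proof (intro allI impI)
    fix q k :: nat assume qk: "k < q"
    show "Cm q k = 0"
    proof (cases "k \<in> {1..n}")
      case True
      then show ?thesis using YP[OF True] qk unfolding Cm_def Cmat_def by force
    next
      case False then show ?thesis by (auto simp: Cm_def Cmat_def)
    qed
  qed
  have "Determinant.det (tm n h) * Determinant.det (tm n Cm) = Determinant.det (tm n X)"
    unfolding X_def tm_mult det_mult[OF tm_carrier tm_carrier] ..
  also have "\<dots> = Determinant.det (tm n bB) * Determinant.det (tm n W)"
    unfolding bW[symmetric] tm_mult det_mult[OF tm_carrier tm_carrier] ..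
  finally have "Determinant.det (tm n Cm) \<noteq> 0"
    using \<open>Determinant.det (tm n bB) = 1\<close> W_GL by (auto simp: GL_iff_det)
  then have CG: "Cm \<in> GL n" using Cmats by (simp add: GL_iff_det)
  have "Cm \<in> Bor n" "bB \<in> Bor n" using BorI CG Cup bG bup by auto
  moreover have "mmult n h Cm = mmult n bB W" using bW X_def by simp
  ultimately show ?thesis by blast
qed

end


context wsetup begin

lemma chart:
  assumes gG: "g \<in> GL n" and col: "\<forall>a. g a i = ev 1 a" and row: "\<forall>b. 1 \<le> b \<and> b < j \<longrightarrow> g n b = 0"
    and C: "flag_closed n C" and TC: "{flagof n (mmult n b W) | b. b \<in> Bor n} \<subseteq> C"
  shows "flagof n g \<in> C"
proof -
  define P where "P = {g \<in> GL n. flagof n g \<in> C}"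
  have Pc: "closedin (top_of_set (GL n)) P" using C unfolding flag_closed_def P_def by blast
  define gt where "gt = (\<lambda>t::complex. \<lambda>a b. g a b + t * (W a b - g a b))"
  define K where "K = {1..n} - {i}"
  define f where "f = (\<lambda>t. Determinant.det (tm n (gt t)) * (\<Prod>k\<in>K. Determinant.det (tm n (Ak n i j (gt t) k))))"
  have hent: "(\<lambda>t. gt t q c) holomorphic_on UNIV" for q c
    unfolding gt_def by (intro holomorphic_intros)
  have hAk: "(\<lambda>t. Ak n i j (gt t) k q c) holomorphic_on UNIV" for k q c
  proof (cases "c \<in> Ck n i j k")
    case True
    show ?thesis
    proof (cases "q \<in> w ` Ck n i j k")
      case True
      then show ?thesis using \<open>c \<in> Ck n i j k\<close> hent by (simp add: Ak_def)
    next
      case False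
      then show ?thesis using \<open>c \<in> Ck n i j k\<close> by (simp add: Ak_def holomorphic_on_const)
    qed
  next
    case False
    then show ?thesis by (simp add: Ak_def holomorphic_on_const)
  qed
  have fh: "f holomorphic_on UNIV"
    unfolding f_def
    by (intro holomorphic_intros holo_det hent hAk)
  have gt1: "gt 1 = W" unfolding gt_def by (intro ext) simp
  have "f 1 = Determinant.det (tm n W) * (\<Prod>k\<in>K. Determinant.det (tm n W))"
    unfolding f_def gt1 using Ak_W unfolding K_def by simp
  then have f1: "f 1 \<noteq> 0" using W_GL unfolding K_def by (simp add: GL_iff_det)
  obtain s where s: "\<And>m. s m \<noteq> 0" "\<And>m. f (s m) \<noteq> 0" "s \<longlonglongrightarrow> 0"
    using limpt_nonzero[OF fh f1] by blast
  have inP: "gt (s m) \<in> P" for m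
  proof -
    let ?h = "gt (s m)"
    have fin: "finite K" unfolding K_def by simp
    have dets: "Determinant.det (tm n ?h) \<noteq> 0" "\<forall>k\<in>K. Determinant.det (tm n (Ak n i j ?h k)) \<noteq> 0"
      using s(2)[of m] fin unfolding f_def by auto
    have hm: "?h \<in> mats n"
      using GL_mats[OF gG] W_mats unfolding gt_def by (auto simp: mats_def)
    have hG: "?h \<in> GL n" using hm dets(1) by (simp add: GL_iff_det)
    have hcol: "\<forall>a. ?h a i = ev 1 a" using col W_col_i unfolding gt_def by simp
    have hrow: "\<forall>b. 1 \<le> b \<and> b < j \<longrightarrow> ?h n b = 0" using row W_row_n unfolding gt_def by simp
    have "\<forall>k\<in>{1..n}. k \<noteq> i \<longrightarrow> Determinant.det (tm n (Ak n i j ?h k)) \<noteq> 0"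
      using dets(2) unfolding K_def by blast
    then obtain c b where cb: "c \<in> Bor n" "b \<in> Bor n" "mmult n ?h c = mmult n b W"
      using crit[OF hG hcol hrow] by blast
    have "flagof n ?h = flagof n (mmult n b W)"
      using flagof_mult[OF cb(1) hm] cb(3) by simp
    then have "flagof n ?h \<in> C" using TC cb(2) by blast
    then show ?thesis unfolding P_def using hG by blast
  qed
  have lim: "(\<lambda>m. gt (s m)) \<longlonglongrightarrow> g"
    unfolding gt_def using line_tendsto[OF s(3), of g "\<lambda>a b. W a b - g a b"] by simp
  have "g \<in> P" by (rule closedin_seq[OF Pc _ lim gG]) (rule inP)
  then show ?thesis unfolding P_def by blast
qed

end


lemma GL_of_inj: assumes h: "h \<in> mats n" and inj: "\<And>x. mv n h x = (\<lambda>_. 0) \<Longrightarrow> \<forall>a\<in>{1..n}. x a = 0"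
  shows "h \<in> GL n"
proof (rule ccontr)
  assume "h \<notin> GL n"
  then have "Determinant.det (tm n h) = 0" using h by (simp add: GL_iff_det)
  then obtain v where v: "v \<in> carrier_vec n" "v \<noteq> 0\<^sub>v n" "tm n h *\<^sub>v v = 0\<^sub>v n"
    using det_0_iff_vec_prod_zero_field[OF tm_carrier] by blast
  define x where "x = (\<lambda>a. if a \<in> {1..n} then v $ (a - 1) else 0)"
  have vx: "Matrix.vec n (\<lambda>r. x (Suc r)) = v" using v(1) by (intro eq_vecI) (auto simp: x_def)
  have "Matrix.vec n (\<lambda>r. mv n h x (Suc r)) = 0\<^sub>v n" using tm_mv[of n h x] vx v(3) by simp
  then have "\<forall>r<n. mv n h x (Suc r) = 0"
    by (metis index_vec index_zero_vec(1))
  then have "mv n h x = (\<lambda>_. 0)"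
  proof -
    assume r: "\<forall>r<n. mv n h x (Suc r) = 0"
    show ?thesis
    proof (intro ext)
      fix a show "mv n h x a = 0"
      proof (cases "a \<in> {1..n}")
        case True
        then obtain r where "a = Suc r" "r < n" by (cases a) auto
        then show ?thesis using r by simp
      next
        case False
        then show ?thesis unfolding mv_def using matsD[OF h] by simp
      qed
    qed
  qed
  then have x0: "\<forall>a\<in>{1..n}. x a = 0" using inj by blast
  have "v = 0\<^sub>v n"
  proof (rule eq_vecI)
    fix r assume "r < dim_vec (0\<^sub>v n :: complex Matrix.vec)"
    then have r: "r < n" by simp
    have "x (Suc r) = 0" using x0 r by auto
    then show "v $ r = 0\<^sub>v n $ r" using r by (simp add: x_def)
  qed (use v(1) in simp)
  then show False using v(2) by simp
qed

context wsetup begin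

lemma S1:
  assumes gG: "g \<in> GL n" and row: "\<forall>b. 1 \<le> b \<and> b < j \<longrightarrow> g n b = 0"
    and u: "\<forall>a. u a \<noteq> 0 \<longrightarrow> a \<in> {1..i}" "mv n g u = ev 1" and ui: "u i \<noteq> 0"
    and C: "flag_closed n C" and TC: "{flagof n (mmult n b W) | b. b \<in> Bor n} \<subseteq> C"
  shows "flagof n g \<in> C"
proof -
  define c where "c = (\<lambda>q r. if r = i then u q else idm n q r)"
  have gm: "g \<in> mats n" using GL_mats[OF gG] .
  have cm: "c \<in> mats n"
  proof (rule matsI)
    fix a b assume "a \<notin> {1..n} \<or> b \<notin> {1..n}"
    then show "c a b = 0" using u(1) i by (auto simp: c_def idm_def)
  qed
  have cu: "upper c" using u(1) unfolding upper_def c_def idm_def by auto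
  have "Determinant.det (tm n c) = (\<Prod>k=1..n. if k = i then u i else 1)"
    unfolding det_upper[OF cu] by (intro prod.cong) (auto simp: c_def idm_def)
  also have "\<dots> = u i" using i by simp
  finally have cG: "c \<in> GL n" using cm ui by (simp add: GL_iff_det)
  have cB: "c \<in> Bor n" using BorI[OF cG cu] .
  define h where "h = mmult n g c"
  have hent: "h a b = (if b = i then ev 1 a else g a b)" for a b
  proof (cases "b = i")
    case True
    have "h a b = mv n g u a" using True unfolding h_def mmult_def c_def mv_def by simp
    then show ?thesis using True u(2) by simp
  next
    case False
    have "h a b = mmult n g (idm n) a b" unfolding h_def mmult_def c_def using False by simp
    then show ?thesis using False mmult_idm_right[OF gm] by simp
  qed
  have hG: "h \<in> GL n" unfolding h_def using GL_mult[OF gG cG] .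
  have hcol: "\<forall>a. h a i = ev 1 a" using hent by simp
  have hrow: "\<forall>b. 1 \<le> b \<and> b < j \<longrightarrow> h n b = 0" using hent row n2 by (auto simp: ev_def)
  have "flagof n h \<in> C" using chart[OF hG hcol hrow C TC] .
  then show ?thesis unfolding h_def flagof_mult[OF cB gm] .
qed

lemma pert:
  assumes gG: "g \<in> GL n" and row: "\<forall>b. 1 \<le> b \<and> b < j \<longrightarrow> g n b = 0"
    and u: "\<forall>a. u a \<noteq> 0 \<longrightarrow> a \<in> {1..i}" "mv n g u = ev 1"
    and p: "p \<in> {1..i}" "u p \<noteq> 0"
    and z: "\<forall>a. z a \<noteq> 0 \<longrightarrow> a \<in> {1..i}" "z p = 0" and pz: "j \<le> p \<or> mv n g z n = 0"
  defines "gt \<equiv> (\<lambda>t a b. g a b + t * (- (if b = p then mv n g z a / u p else 0)))"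
  shows "gt t \<in> GL n \<and> (\<forall>b. 1 \<le> b \<and> b < j \<longrightarrow> gt t n b = 0) \<and>
         (\<forall>a. u a + t * z a \<noteq> 0 \<longrightarrow> a \<in> {1..i}) \<and> mv n (gt t) (\<lambda>a. u a + t * z a) = ev 1"
proof -
  have gm: "g \<in> mats n" using GL_mats[OF gG] .
  have pn: "p \<in> {1..n}" using p(1) i by auto
  have mvgt: "mv n (gt t) x = mv n g (\<lambda>b. x b - (t / u p) * x p * z b)" for x
  proof (intro ext)
    fix a
    have "mv n (gt t) x a = (\<Sum>b=1..n. g a b * x b - (if b = p then t * (mv n g z a / u p) * x b else 0))"
      unfolding mv_def gt_def by (intro sum.cong) (auto simp: algebra_simps)
    also have "\<dots> = (\<Sum>b=1..n. g a b * x b) - (\<Sum>b=1..n. if b = p then t * (mv n g z a / u p) * x b else 0)"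
      by (rule sum_subtractf)
    also have "\<dots> = (\<Sum>b=1..n. g a b * x b) - t * (mv n g z a / u p) * x p"
      using pn by (simp add: sum_delta_1n)
    also have "\<dots> = (\<Sum>b=1..n. g a b * x b) - ((t / u p) * x p) * (\<Sum>b=1..n. g a b * z b)"
      unfolding mv_def by simp
    also have "\<dots> = (\<Sum>b=1..n. g a b * (x b - (t / u p) * x p * z b))"
      by (simp add: right_diff_distrib sum_subtractf sum_distrib_left mult_ac)
    also have "\<dots> = mv n g (\<lambda>b. x b - (t / u p) * x p * z b) a"
      unfolding mv_def ..
    finally show "mv n (gt t) x a = mv n g (\<lambda>b. x b - (t / u p) * x p * z b) a" .
  qed
  have gtm: "gt t \<in> mats n"
  proof (rule matsI)
    fix a b assume ab: "a \<notin> {1..n} \<or> b \<notin> {1..n}"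
    have "mv n g z a = 0" if "a \<notin> {1..n}" unfolding mv_def using matsD[OF gm] that by simp
    then show "gt t a b = 0" using ab matsD[OF gm] pn unfolding gt_def by auto
  qed
  have inj: "\<forall>a\<in>{1..n}. x a = 0" if x0: "mv n (gt t) x = (\<lambda>_. 0)" for x
  proof -
    define y where "y = (\<lambda>b. x b - (t / u p) * x p * z b)"
    have yy: "mv n g y = mv n g (\<lambda>_. 0)" using x0 mvgt[of x] by (simp add: y_def mv_zero)
    have y0: "\<forall>a\<in>{1..n}. y a = 0"
    proof
      fix a assume a: "a \<in> {1..n}"
      show "y a = 0" using mv_inj[OF gG yy a] by simp
    qed
    have "y p = 0" using y0 pn by blast
    then have xp: "x p = 0" using z(2) by (simp add: y_def)
    show ?thesis
    proof
      fix a assume a: "a \<in> {1..n}"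
      have "y a = 0" using y0 a by blast
      then show "x a = 0" using xp by (simp add: y_def)
    qed
  qed
  have "gt t \<in> GL n" using GL_of_inj[OF gtm] inj by blast
  moreover have "\<forall>b. 1 \<le> b \<and> b < j \<longrightarrow> gt t n b = 0" using row pz unfolding gt_def by auto
  moreover have "\<forall>a. u a + t * z a \<noteq> 0 \<longrightarrow> a \<in> {1..i}"
  proof (intro allI impI)
    fix a assume "u a + t * z a \<noteq> 0"
    then have "u a \<noteq> 0 \<or> z a \<noteq> 0" by auto
    then show "a \<in> {1..i}" using u(1) z(1) by blast
  qed
  moreover have "mv n (gt t) (\<lambda>a. u a + t * z a) = ev 1"
  proof -
    have "(\<lambda>b. u b + t * z b - t / u p * (u p + t * z p) * z b) = u" using p(2) z(2) by (intro ext) simp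
    then show ?thesis using mvgt u(2) by simp
  qed
  ultimately show ?thesis by blast
qed

end


lemma seq_inv_tendsto: "(\<lambda>m. complex_of_real (inverse (real (Suc m)))) \<longlonglongrightarrow> 0"
  using tendsto_of_real[OF LIMSEQ_inverse_real_of_nat] by (simp only: of_real_0)

lemma one_plus_nat_nz: "(1::complex) + of_nat m \<noteq> 0"
proof -
  have "(1::complex) + of_nat m = of_nat (Suc m)" by simp
  also have "\<dots> \<noteq> 0" by (simp only: of_nat_eq_0_iff)
  finally show ?thesis .
qed

lemma seq_inv_nz: "complex_of_real (inverse (real (Suc m))) \<noteq> 0"
  using one_plus_nat_nz[of m] by simp

context wsetup begin

lemma lim_flag:
  assumes C: "flag_closed n C" and gG: "g \<in> GL n" and lim: "G \<longlonglongrightarrow> g"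
    and GG: "\<And>m. G m \<in> GL n \<and> flagof n (G m) \<in> C"
  shows "flagof n g \<in> C"
proof -
  define P where "P = {g \<in> GL n. flagof n g \<in> C}"
  have Pc: "closedin (top_of_set (GL n)) P" using C unfolding flag_closed_def P_def by blast
  have "g \<in> P" by (rule closedin_seq[OF Pc _ lim gG]) (use GG in \<open>auto simp: P_def\<close>)
  then show ?thesis unfolding P_def by blast
qed

lemma L2:
  assumes gG: "g \<in> GL n" and row: "\<forall>b. 1 \<le> b \<and> b < j \<longrightarrow> g n b = 0"
    and u: "\<forall>a. u a \<noteq> 0 \<longrightarrow> a \<in> {1..i}" "mv n g u = ev 1"
    and p: "p \<in> {1..i}" "u p \<noteq> 0" and pj: "j \<le> p \<or> g n i = 0"
    and C: "flag_closed n C" and TC: "{flagof n (mmult n b W) | b. b \<in> Bor n} \<subseteq> C"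
  shows "flagof n g \<in> C"
proof (cases "u i \<noteq> 0")
  case True
  then show ?thesis using S1[OF gG row u True C TC] by blast
next
  case False
  then have pi: "p \<noteq> i" using p(2) by auto
  define z where "z = ev i"
  have z: "\<forall>a. z a \<noteq> 0 \<longrightarrow> a \<in> {1..i}" "z p = 0" using i pi by (auto simp: z_def ev_def)
  have pz: "j \<le> p \<or> mv n g z n = 0" using pj mv_ev[OF i, of g] by (auto simp: z_def)
  define gt where "gt = (\<lambda>t a b. g a b + t * (- (if b = p then mv n g z a / u p else 0)))"
  define s where "s = (\<lambda>m. complex_of_real (inverse (real (Suc m))))"
  have "gt (s m) \<in> GL n \<and> flagof n (gt (s m)) \<in> C" for m
  proof -
    have D: "gt (s m) \<in> GL n" "\<forall>b. 1 \<le> b \<and> b < j \<longrightarrow> gt (s m) n b = 0"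
      "\<forall>a. u a + s m * z a \<noteq> 0 \<longrightarrow> a \<in> {1..i}" "mv n (gt (s m)) (\<lambda>a. u a + s m * z a) = ev 1"
      using pert[OF gG row u p z pz, of "s m"] unfolding gt_def by blast+
    have "u i + s m * z i \<noteq> 0" using False one_plus_nat_nz[of m] by (simp add: z_def ev_def s_def)
    then show ?thesis using S1[OF D(1,2) D(3,4) _ C TC] D(1) by blast
  qed
  moreover have "(\<lambda>m. gt (s m)) \<longlonglongrightarrow> g"
    unfolding gt_def using line_tendsto[OF seq_inv_tendsto[folded s_def], of g "\<lambda>a b. - (if b = p then mv n g z a / u p else 0)"] by simp
  ultimately show ?thesis using lim_flag[OF C gG] by blast
qed

lemma dense:
  assumes Sg: "Sc n i j g" and C: "flag_closed n C" and TC: "{flagof n (mmult n b W) | b. b \<in> Bor n} \<subseteq> C"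
  shows "flagof n g \<in> C"
proof -
  obtain u where gG: "g \<in> GL n" and row: "\<forall>b. 1 \<le> b \<and> b < j \<longrightarrow> g n b = 0"
    and u: "\<forall>a. u a \<noteq> 0 \<longrightarrow> a \<in> {1..i}" "mv n g u = ev 1"
    using Sg unfolding Sc_def by blast
  show ?thesis
  proof (cases "u i \<noteq> 0")
    case True
    then show ?thesis using S1[OF gG row u True C TC] by blast
  next
    case False
    define S where "S = {k \<in> {1..i}. u k \<noteq> 0}"
    obtain a where a: "a \<in> {1..n}" "u a \<noteq> 0" using vec_nz[OF u(2)] by blast
    have "a \<in> S" using a u(1) unfolding S_def by blast
    then have Sne: "S \<noteq> {}" by blast
    have Sfin: "finite S" unfolding S_def by simp
    define p where "p = Max S"
    have pS: "p \<in> S" unfolding p_def using Max_in[OF Sfin Sne] .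
    have pmax: "\<And>k. k \<in> S \<Longrightarrow> k \<le> p" unfolding p_def using Max_ge[OF Sfin] by blast
    have p: "p \<in> {1..i}" "u p \<noteq> 0" using pS unfolding S_def by auto
    show ?thesis
    proof (cases "j \<le> p \<or> g n i = 0")
      case True
      then show ?thesis using L2[OF gG row u p True C TC] by blast
    next
      case False
      then have pj: "p < j" and gni: "g n i \<noteq> 0" by auto
      have ji: "j < i"
      proof (rule ccontr)
        assume "\<not> j < i"
        then have "i < j" using ij by simp
        then have "g n i = 0" using row i by auto
        then show False using gni by simp
      qed
      have j1: "1 \<le> j" using pj p(1) by auto
      have uj: "u j = 0"
      proof (rule ccontr)
        assume "u j \<noteq> 0"
        then have "j \<in> S" unfolding S_def using j1 ji by auto
        then show False using pmax pj by fastforce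
      qed
      define c where "c = g n j / g n i"
      define z where "z = (\<lambda>a. ev j a + (- c) * ev i a)"
      have z: "\<forall>a. z a \<noteq> 0 \<longrightarrow> a \<in> {1..i}" "z p = 0"
        using j1 ji pj i by (auto simp: z_def ev_def)
      have "mv n g z n = mv n g (ev j) n + (- c) * g n i"
        unfolding z_def using mv_add_ev[OF i, of g "ev j" "- c"] by simp
      also have "\<dots> = 0" using mv_ev[OF j, of g] gni by (simp add: c_def)
      finally have pz: "j \<le> p \<or> mv n g z n = 0" by simp
      define gt where "gt = (\<lambda>t a b. g a b + t * (- (if b = p then mv n g z a / u p else 0)))"
      define s where "s = (\<lambda>m. complex_of_real (inverse (real (Suc m))))"
      have "gt (s m) \<in> GL n \<and> flagof n (gt (s m)) \<in> C" for m
      proof -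
        have D: "gt (s m) \<in> GL n" "\<forall>b. 1 \<le> b \<and> b < j \<longrightarrow> gt (s m) n b = 0"
          "\<forall>a. u a + s m * z a \<noteq> 0 \<longrightarrow> a \<in> {1..i}" "mv n (gt (s m)) (\<lambda>a. u a + s m * z a) = ev 1"
          using pert[OF gG row u p z pz, of "s m"] unfolding gt_def by blast+
        have "u j + s m * z j \<noteq> 0" using uj ji one_plus_nat_nz[of m] by (simp add: z_def ev_def s_def)
        moreover have "j \<in> {1..i}" using j1 ji by auto
        ultimately show ?thesis using L2[OF D(1,2) D(3,4) _ _ _ C TC] D(1) by blast
      qed
      moreover have "(\<lambda>m. gt (s m)) \<longlonglongrightarrow> g"
        unfolding gt_def using line_tendsto[OF seq_inv_tendsto[folded s_def], of g "\<lambda>a b. - (if b = p then mv n g z a / u p else 0)"] by simp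
      ultimately show ?thesis using lim_flag[OF C gG] by blast
    qed
  qed
qed

end


lemma pmat_mult: assumes "\<forall>k\<in>{1..n}. g k \<in> {1..n}"
  shows "mmult n (pmat n f) (pmat n g) = pmat n (f \<circ> g)"
proof (intro ext)
  fix a c
  have "mmult n (pmat n f) (pmat n g) a c =
        (\<Sum>k=1..n. if k = g c then (if c \<in> {1..n} \<and> a = f k then 1 else 0) else 0)"
    unfolding mmult_def pmat_def by (intro sum.cong) auto
  also have "\<dots> = pmat n (f \<circ> g) a c"
    using assms by (auto simp: sum_delta_1n pmat_def)
  finally show "mmult n (pmat n f) (pmat n g) a c = pmat n (f \<circ> g) a c" .
qed

lemma idm_pmat: "idm n = pmat n id"
  unfolding idm_def pmat_def by (intro ext) auto

lemma foldr_range: "\<forall>f\<in>set fs. \<forall>k\<in>{1..n}. f k \<in> {1..n} \<Longrightarrow> \<forall>k\<in>{1..n}. foldr (\<circ>) fs id k \<in> {1..n}"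
  by (induction fs) auto

lemma mprod_map: "\<forall>f\<in>set fs. \<forall>k\<in>{1..n}. f k \<in> {1..n} \<Longrightarrow>
  mprod n (map (pmat n) fs) = pmat n (foldr (\<circ>) fs id)"
proof (induction fs)
  case Nil
  then show ?case by (simp add: mprod_def idm_pmat id_def)
next
  case (Cons f fs)
  have "mprod n (map (pmat n) (f # fs)) = mmult n (pmat n f) (mprod n (map (pmat n) fs))"
    by (simp add: mprod_def)
  also have "\<dots> = mmult n (pmat n f) (pmat n (foldr (\<circ>) fs id))"
  proof -
    have "\<forall>f\<in>set fs. \<forall>k\<in>{1..n}. f k \<in> {1..n}" using Cons.prems by simp
    then have "mprod n (map (pmat n) fs) = pmat n (foldr (\<circ>) fs id)" by (rule Cons.IH)
    then show ?thesis by (rule arg_cong)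
  qed
  also have "\<dots> = pmat n (f \<circ> foldr (\<circ>) fs id)"
    by (rule pmat_mult) (use foldr_range[of fs n] Cons.prems in auto)
  also have "f \<circ> foldr (\<circ>) fs id = foldr (\<circ>) (f # fs) id"
    by (simp only: foldr.simps comp_apply)
  finally show ?case .
qed

lemma pmat_cong: "(\<forall>k\<in>{1..n}. f k = g k) \<Longrightarrow> pmat n f = pmat n g"
  unfolding pmat_def by (intro ext) auto

lemma foldr_comp_append: "foldr (\<circ>) (xs @ ys) id = foldr (\<circ>) xs id \<circ> foldr (\<circ>) ys id"
  by (induction xs) auto

definition c1 :: "nat \<Rightarrow> nat \<Rightarrow> nat" where
  "c1 J k = (if k = J then 1 else if 1 \<le> k \<and> k < J then k + 1 else k)"

definition c2 :: "nat \<Rightarrow> nat \<Rightarrow> nat \<Rightarrow> nat" where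
  "c2 i M k = (if k = i then M else if i < k \<and> k \<le> M then k - 1 else k)"

lemma c1_foldr: "1 \<le> J \<Longrightarrow> foldr (\<circ>) (map (\<lambda>m. Transposition.transpose m (m + 1)) [1..<J]) id = c1 J"
proof (induction J rule: nat_induct_at_least)
  case base
  then show ?case by (intro ext) (simp add: c1_def)
next
  case (Suc J)
  have "[1..<Suc J] = [1..<J] @ [J]" using Suc.hyps by simp
  then have "foldr (\<circ>) (map (\<lambda>m. Transposition.transpose m (m + 1)) [1..<Suc J]) id =
     c1 J \<circ> Transposition.transpose J (J + 1)"
    unfolding \<open>[1..<Suc J] = [1..<J] @ [J]\<close> map_append foldr_comp_append Suc.IH by simp
  also have "\<dots> = c1 (Suc J)"
  proof (intro ext)
    fix k
    show "(c1 J \<circ> Transposition.transpose J (J + 1)) k = c1 (Suc J) k"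
      using Suc.hyps by (cases "k = J"; cases "k = Suc J") (auto simp: c1_def Transposition.transpose_def)
  qed
  finally show ?case .
qed

lemma c2_foldr: "i \<le> M \<Longrightarrow> foldr (\<circ>) (map (\<lambda>m. Transposition.transpose (m + 1) m) (rev [i..<M])) id = c2 i M"
proof (induction M rule: nat_induct_at_least)
  case base
  then show ?case by (intro ext) (simp add: c2_def)
next
  case (Suc M)
  have "rev [i..<Suc M] = M # rev [i..<M]" using Suc.hyps by simp
  then have "foldr (\<circ>) (map (\<lambda>m. Transposition.transpose (m + 1) m) (rev [i..<Suc M])) id =
     Transposition.transpose (M + 1) M \<circ> c2 i M"
    unfolding \<open>rev [i..<Suc M] = M # rev [i..<M]\<close> list.map(2) foldr.simps(2) comp_apply Suc.IH by simp
  also have "\<dots> = c2 i (Suc M)"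
  proof (intro ext)
    fix k
    show "(Transposition.transpose (M + 1) M \<circ> c2 i M) k = c2 i (Suc M) k"
      using Suc.hyps by (cases "k = i"; cases "k = Suc M"; cases "i < k \<and> k \<le> M") (auto simp: c2_def Transposition.transpose_def)
  qed
  finally show ?case .
qed


lemma Wexpr: assumes J: "1 \<le> J" "J \<le> n" and i: "i \<in> {1..n}"
  shows "mprod n ([pmat n (w0 n)] @ map (\<lambda>m. pmat n (Transposition.transpose m (m + 1))) [1..<J]
                  @ map (\<lambda>m. pmat n (Transposition.transpose (m + 1) m)) (rev [i..<n]))
         = pmat n (w0 n \<circ> c1 J \<circ> c2 i n)"
proof -
  define fs where "fs = [w0 n] @ map (\<lambda>m. Transposition.transpose m (m + 1)) [1..<J]
                  @ map (\<lambda>m. Transposition.transpose (m + 1) m) (rev [i..<n])"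
  have L: "[pmat n (w0 n)] @ map (\<lambda>m. pmat n (Transposition.transpose m (m + 1))) [1..<J]
                  @ map (\<lambda>m. pmat n (Transposition.transpose (m + 1) m)) (rev [i..<n]) = map (pmat n) fs"
    unfolding fs_def by simp
  have R: "\<forall>f\<in>set fs. \<forall>k\<in>{1..n}. f k \<in> {1..n}"
    using J i unfolding fs_def by (auto simp: w0_def Transposition.transpose_def)
  have iln: "i \<le> n" using i by simp
  have "foldr (\<circ>) fs id = w0 n \<circ> (c1 J \<circ> c2 i n)"
    unfolding fs_def foldr_comp_append c1_foldr[OF J(1)] c2_foldr[OF iln] by simp
  then show ?thesis unfolding L mprod_map[OF R] by (simp add: comp_assoc)
qed

context wsetup begin

lemma vcomp: assumes k: "k \<in> {1..n}"
  shows "c1 (if j < i then j else j - 1) (c2 i n k) = vv n i j k"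
proof (cases "j < i")
  case True
  consider "k = i" | "i < k" | "k < i" by linarith
  then show ?thesis
  proof cases
    case 1 then show ?thesis using True i j by (auto simp: c1_def c2_def vv_def)
  next
    case 2 then show ?thesis using True i j k by (auto simp: c1_def c2_def vv_def gv_def)
  next
    case 3
    then have c2k: "c2 i n k = k" by (simp add: c2_def)
    consider "k = j" | "k < j" | "j < k" by linarith
    then show ?thesis
    proof cases
      case 1 then show ?thesis using True c2k by (simp add: c1_def vv_def)
    next
      case 2 then show ?thesis using True c2k 3 k by (auto simp: c1_def vv_def gv_def)
    next
      case 4: 3 then show ?thesis using True c2k \<open>k < i\<close> k by (auto simp: c1_def vv_def gv_def)
    qed
  qed
next
  case False
  then have ij': "i < j" using ij by simp
  consider "k = i" | "i < k" | "k < i" by linarith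
  then show ?thesis
  proof cases
    case 1 then show ?thesis using ij' i j by (auto simp: c1_def c2_def vv_def)
  next
    case 2
    then have c2k: "c2 i n k = k - 1" using k by (simp add: c2_def)
    consider "k = j" | "k < j" | "j < k" by linarith
    then show ?thesis
    proof cases
      case 1 then show ?thesis using ij' c2k 2 by (auto simp: c1_def vv_def)
    next
      case 3: 2 then show ?thesis using ij' c2k \<open>i < k\<close> i by (auto simp: c1_def vv_def gv_def)
    next
      case 4: 3 then show ?thesis using ij' c2k \<open>i < k\<close> by (auto simp: c1_def vv_def gv_def)
    qed
  next
    case 3
    then have c2k: "c2 i n k = k" by (simp add: c2_def)
    then show ?thesis using ij' 3 k by (auto simp: c1_def vv_def gv_def)
  qed
qed

lemma W_is: "(if j < i then
         mprod n ([pmat n (w0 n)]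
                  @ map (\<lambda>m. pmat n (Transposition.transpose m (m + 1))) [1..<j]
                  @ map (\<lambda>m. pmat n (Transposition.transpose (m + 1) m)) (rev [i..<n]))
       else
         mprod n ([pmat n (w0 n)]
                  @ map (\<lambda>m. pmat n (Transposition.transpose m (m + 1))) [1..<j - 1]
                  @ map (\<lambda>m. pmat n (Transposition.transpose (m + 1) m)) (rev [i..<n]))) = W"
proof -
  define J where "J = (if j < i then j else j - 1)"
  have J: "1 \<le> J" "J \<le> n" using i j ij unfolding J_def by auto
  have "(if j < i then
         mprod n ([pmat n (w0 n)]
                  @ map (\<lambda>m. pmat n (Transposition.transpose m (m + 1))) [1..<j]
                  @ map (\<lambda>m. pmat n (Transposition.transpose (m + 1) m)) (rev [i..<n]))
       else
         mprod n ([pmat n (w0 n)]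
                  @ map (\<lambda>m. pmat n (Transposition.transpose m (m + 1))) [1..<j - 1]
                  @ map (\<lambda>m. pmat n (Transposition.transpose (m + 1) m)) (rev [i..<n]))) =
     mprod n ([pmat n (w0 n)]
                  @ map (\<lambda>m. pmat n (Transposition.transpose m (m + 1))) [1..<J]
                  @ map (\<lambda>m. pmat n (Transposition.transpose (m + 1) m)) (rev [i..<n]))"
    unfolding J_def by simp
  also have "\<dots> = pmat n (w0 n \<circ> c1 J \<circ> c2 i n)" using Wexpr[OF J i] .
  also have "\<dots> = W"
  proof (rule pmat_cong, intro ballI)
    fix k assume k: "k \<in> {1..n}"
    have "c1 J (c2 i n k) = vv n i j k" using vcomp[OF k] unfolding J_def .
    then show "(w0 n \<circ> c1 J \<circ> c2 i n) k = w k"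
      using vv_range[OF k] k by (simp add: w0_def ww_def)
  qed
  finally show ?thesis .
qed

lemma T_sub_XH: "b \<in> Bor n \<Longrightarrow> Sc n i j (mmult n b W)"
proof -
  assume bB: "b \<in> Bor n"
  have bG: "b \<in> GL n" and bu: "upper b" using bB by (auto simp: Bor_GL Bor_upper)
  have bm: "b \<in> mats n" using GL_mats[OF bG] .
  have MG: "mmult n b W \<in> GL n" using GL_mult[OF bG W_GL] .
  have row: "\<forall>c. 1 \<le> c \<and> c < j \<longrightarrow> mmult n b W n c = 0"
  proof (intro allI impI)
    fix c assume c: "1 \<le> c \<and> c < j"
    then have cn: "c \<in> {1..n}" using j by auto
    have "w c \<noteq> n" using w_inj[OF cn j] w_j c by auto
    then have "w c < n" using w_range[OF cn] by auto
    then show "mmult n b W n c = 0" using bu cn unfolding mult_W upper_def by auto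
  qed
  have b11: "b 1 1 \<noteq> 0" using diag_nz[OF bG bu, of 1] n2 by auto
  define u where "u = (\<lambda>a. (1 / b 1 1) * ev i a)"
  have us: "\<forall>a. u a \<noteq> 0 \<longrightarrow> a \<in> {1..i}" using i by (auto simp: u_def ev_def)
  have "mv n (mmult n b W) u a = ev 1 a" for a
  proof -
    have "mv n (mmult n b W) u a = (\<Sum>c=1..n. if c = i then (1 / b 1 1) * mmult n b W a i else 0)"
      unfolding mv_def u_def ev_def by (intro sum.cong) auto
    also have "\<dots> = (1 / b 1 1) * b a 1" using i by (simp add: sum_delta_1n mult_W w_i)
    also have "\<dots> = ev 1 a"
    proof (cases "a = 1")
      case True then show ?thesis using b11 by (simp add: ev_def)
    next
      case False
      then have "b a 1 = 0"
        using bu matsD[OF bm, of 0 1] unfolding upper_def by (cases "a = 0") auto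
      then show ?thesis using False by (simp add: ev_def)
    qed
    finally show ?thesis .
  qed
  then have "mv n (mmult n b W) u = ev 1" by blast
  then show ?thesis unfolding Sc_def using MG row us by blast
qed

lemma main_eq: "XH n (Hsp n i j) = Schubert n W"
proof -
  define T where "T = {flagof n (mmult n b W) | b. b \<in> Bor n}"
  have XHc: "flag_closed n (XH n (Hsp n i j))"
    unfolding flag_closed_def
  proof
    show "XH n (Hsp n i j) \<subseteq> Flags n" unfolding XH_def Flags_def by blast
    have "{g \<in> GL n. flagof n g \<in> XH n (Hsp n i j)} = {g \<in> GL n. Sc n i j g}"
      using XH_mem[OF _ n2 i j] by blast
    then show "closedin (top_of_set (GL n)) {g \<in> GL n. flagof n g \<in> XH n (Hsp n i j)}"
      using Sc_closed[of n i j] n2 by simp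
  qed
  have TX: "T \<subseteq> XH n (Hsp n i j)"
  proof
    fix x assume "x \<in> T"
    then obtain b where b: "b \<in> Bor n" "x = flagof n (mmult n b W)" unfolding T_def by blast
    have "Sc n i j (mmult n b W)" using T_sub_XH[OF b(1)] .
    moreover have "mmult n b W \<in> GL n" using calculation unfolding Sc_def by blast
    ultimately show "x \<in> XH n (Hsp n i j)" using XH_mem[OF _ n2 i j] b(2) by blast
  qed
  show ?thesis
    unfolding Schubert_def flag_closure_def T_def[symmetric]
  proof
    show "XH n (Hsp n i j) \<subseteq> \<Inter>{C. flag_closed n C \<and> T \<subseteq> C}"
    proof
      fix x assume "x \<in> XH n (Hsp n i j)"
      then obtain g where g: "x = flagof n g" "g \<in> GL n"
        "mmult n (mmult n (minv n g) (Eunit 1 n)) g \<in> Hsp n i j" unfolding XH_def by blast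
      have Sg: "Sc n i j g" using XH_cond[OF g(2) n2 i j] g(3) by blast
      show "x \<in> \<Inter>{C. flag_closed n C \<and> T \<subseteq> C}"
        using dense[OF Sg] g(1) unfolding T_def by blast
    qed
  next
    show "\<Inter>{C. flag_closed n C \<and> T \<subseteq> C} \<subseteq> XH n (Hsp n i j)"
      using XHc TX by blast
  qed
qed

end

theorem mainTheorem4:
  fixes n i j :: nat
  assumes "n \<ge> 2" and "i \<in> {1..n}" and "j \<in> {1..n}" and "i \<noteq> j"
  shows "XH n (Hsp n i j) =
    Schubert n
      (if j < i then
         mprod n ([pmat n (w0 n)]
                  @ map (\<lambda>m. pmat n (Transposition.transpose m (m + 1))) [1..<j]
                  @ map (\<lambda>m. pmat n (Transposition.transpose (m + 1) m)) (rev [i..<n]))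
       else
         mprod n ([pmat n (w0 n)]
                  @ map (\<lambda>m. pmat n (Transposition.transpose m (m + 1))) [1..<j - 1]
                  @ map (\<lambda>m. pmat n (Transposition.transpose (m + 1) m)) (rev [i..<n])))"
proof -
  interpret wsetup n i j using assms by unfold_locales auto
  show ?thesis unfolding W_is using main_eq .
qed


end
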